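(* Let $0\le\theta\le1$, $\lambda,\sigma\in\mathbb{R}$, $x_0\ne0$, and let $B$ be a standard scalar Brownian motion. For $0<\Delta t<1$ with $1-\lambda\theta\Delta t\ne0$, let $t_n=n\Delta t$, $\Delta B_n=B(t_{n+1})-B(t_n)$, and let $\{X_n^\theta\}$ be the $\theta$-Milstein scheme defined by $X_0^\theta=x_0$ and $$X_n^\theta=X_{n-1}^\theta+\big[\lambda\theta X_n^\theta+\lambda(1-\theta)X_{n-1}^\theta\big]\Delta t+\sigma X_{n-1}^\theta\Delta B_{n-1}+\tfrac{\sigma^2}{2}X_{n-1}^\theta(\Delta B_{n-1}^2-\Delta t),\quad n\ge1.$$ Then there exist $0<\Delta t_3<1$ and $C_5,C_6>0$ such that for all $0<\Delta t<\Delta t_3$, $$\lambda+\tfrac{\sigma^2}{2}-C_5\Delta t\le\limsup_{n\to\infty}\frac1{t_n}\log\big[\mathbb E|X_n^\theta|^2\big]^{1/2}\le\lambda+\tfrac{\sigma^2}{2}+C_5\Delta t,$$ and almost surely $$\lambda-\tfrac{\sigma^2}{2}-C_6\Delta t^{1/2}\le\limsup_{n\to\infty}\frac1{t_n}\log|X_n^\theta|\le\lambda-\tfrac{\sigma^2}{2}+C_6\Delta t^{1/2}.$$ Consequently, for $0<\Delta t<\Delta t_3$: (a) if $\lambda+\frac{\sigma^2}{2}<0$ (resp. $>0$) then $X_n^\theta$ is mean-square exponentially stable (resp. mean-square exponentially blowing up); (b) if $\lambda-\frac{\sigma^2}{2}<0$ (resp. $>0$) then $X_n^\theta$ is almost-surely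 exponentially stable (resp. almost-surely exponentially blowing up).
   Context: Terminology: a sequence $X_n$ is mean-square exponentially stable if there exist $C,\alpha>0$ with $[\mathbb E|X_n|^2]^{1/2}\le Ce^{-\alpha t_n}$ for all large $n$, and mean-square exponentially blowing up if there exist $C,\beta>0$ with $[\mathbb E|X_n|^2]^{1/2}\ge Ce^{\beta t_n}$ for all large $n$; almost-surely exponentially stable (resp. blowing up) means that almost surely $|X_n|\le Ce^{-\alpha t_n}$ (resp. $|X_n|\ge Ce^{\beta t_n}$) for all large $n$, for some $\alpha>0$ (resp. $\beta>0$) and a (possibly random) $C>0$. Constants may depend on $\lambda,\sigma,\theta$. *)

theory Defs
  imports "HOL-Probability.Probability"
begin

definition brownian_motion :: "'a measure \<Rightarrow> (real \<Rightarrow> 'a \<Rightarrow> real) \<Rightarrow> bool" where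
  "brownian_motion M B \<longleftrightarrow>
     prob_space M \<and>
     (\<forall>t\<ge>0. B t \<in> borel_measurable M) \<and>
     (AE \<omega> in M. B 0 \<omega> = 0) \<and>
     (AE \<omega> in M. continuous_on {0..} (\<lambda>t. B t \<omega>)) \<and>
     (\<forall>s t. 0 \<le> s \<and> s < t \<longrightarrow>
        distributed M lborel (\<lambda>\<omega>. B t \<omega> - B s \<omega>)
          (\<lambda>x. ennreal (normal_density 0 (sqrt (t - s)) x))) \<and>
     (\<forall>ts :: real list. sorted_wrt (<) ts \<and> ts \<noteq> [] \<and> hd ts \<ge> 0 \<longrightarrow>
        prob_space.indep_vars M (\<lambda>_. borel)
          (\<lambda>i \<omega>. B (ts ! Suc i) \<omega> - B (ts ! i) \<omega>) {..< length ts - 1})"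

definition theta_milstein ::
  "'a measure \<Rightarrow> (real \<Rightarrow> 'a \<Rightarrow> real) \<Rightarrow> real \<Rightarrow> real \<Rightarrow> real \<Rightarrow> real \<Rightarrow> real
     \<Rightarrow> (nat \<Rightarrow> 'a \<Rightarrow> real) \<Rightarrow> bool" where
  "theta_milstein M B \<theta> lam \<sigma> x0 dt X \<longleftrightarrow>
     (\<forall>\<omega>\<in>space M. X 0 \<omega> = x0 \<and>
        (\<forall>n\<ge>1. let dB = B (real n * dt) \<omega> - B (real (n - 1) * dt) \<omega> in
           X n \<omega> = X (n - 1) \<omega>
             + (lam * \<theta> * X n \<omega> + lam * (1 - \<theta>) * X (n - 1) \<omega>) * dt
             + \<sigma> * X (n - 1) \<omega> * dB
             + \<sigma>\<^sup>2 / 2 * X (n - 1) \<omega> * (dB\<^sup>2 - dt)))"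

definition ms_exp_stable :: "'a measure \<Rightarrow> real \<Rightarrow> (nat \<Rightarrow> 'a \<Rightarrow> real) \<Rightarrow> bool" where
  "ms_exp_stable M dt X \<longleftrightarrow> (\<exists>C>0. \<exists>\<alpha>>0. \<forall>\<^sub>F n in sequentially.
     sqrt (integral\<^sup>L M (\<lambda>\<omega>. (X n \<omega>)\<^sup>2)) \<le> C * exp (- \<alpha> * (real n * dt)))"

definition ms_exp_blowup :: "'a measure \<Rightarrow> real \<Rightarrow> (nat \<Rightarrow> 'a \<Rightarrow> real) \<Rightarrow> bool" where
  "ms_exp_blowup M dt X \<longleftrightarrow> (\<exists>C>0. \<exists>\<beta>>0. \<forall>\<^sub>F n in sequentially.
     sqrt (integral\<^sup>L M (\<lambda>\<omega>. (X n \<omega>)\<^sup>2)) \<ge> C * exp (\<beta> * (real n * dt)))"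

definition as_exp_stable :: "'a measure \<Rightarrow> real \<Rightarrow> (nat \<Rightarrow> 'a \<Rightarrow> real) \<Rightarrow> bool" where
  "as_exp_stable M dt X \<longleftrightarrow> (\<exists>\<alpha>>0. AE \<omega> in M. \<exists>C>0. \<forall>\<^sub>F n in sequentially.
     \<bar>X n \<omega>\<bar> \<le> C * exp (- \<alpha> * (real n * dt)))"

definition as_exp_blowup :: "'a measure \<Rightarrow> real \<Rightarrow> (nat \<Rightarrow> 'a \<Rightarrow> real) \<Rightarrow> bool" where
  "as_exp_blowup M dt X \<longleftrightarrow> (\<exists>\<beta>>0. AE \<omega> in M. \<exists>C>0. \<forall>\<^sub>F n in sequentially.
     \<bar>X n \<omega>\<bar> \<ge> C * exp (\<beta> * (real n * dt)))"

end

theory Submission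
  imports Defs "HOL-Probability.Probability"
begin

lemma taylor_powr3:
  fixes q y :: real assumes y: "y > 0" "y \<noteq> 1"
  shows "\<exists>t. t > 0 \<and> min y 1 \<le> t \<and> t \<le> max y 1 \<and>
    y powr q = 1 + q * (y - 1) + q * (q - 1) / 2 * (y - 1)^2
       + q * (q - 1) * (q - 2) / 6 * t powr (q - 3) * (y - 1)^3"
proof -
  define diff where "diff m t = (\<Prod>j<m. (q - real j)) * t powr (q - real m)" for m t
  have D: "\<forall>m t. m < 3 \<and> min y 1 \<le> t \<and> t \<le> max y 1 \<longrightarrow> DERIV (diff m) t :> diff (Suc m) t"
  proof (intro allI impI)
    fix m :: nat and t :: real assume h: "m < 3 \<and> min y 1 \<le> t \<and> t \<le> max y 1"
    then have tp: "t > 0" using y by (auto simp: min_def split: if_splits)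
    have "DERIV (\<lambda>t. (\<Prod>j<m. (q - real j)) * t powr (q - real m)) t :>
        (\<Prod>j<m. (q - real j)) * ((q - real m) * t powr (q - real m - 1))"
      by (intro DERIV_cmult has_real_derivative_powr tp)
    moreover have "(\<Prod>j<m. (q - real j)) * ((q - real m) * t powr (q - real m - 1)) = diff (Suc m) t"
      by (simp add: diff_def algebra_simps)
    ultimately show "DERIV (diff m) t :> diff (Suc m) t" unfolding diff_def by simp
  qed
  have d0: "diff 0 = (\<lambda>t. t powr q)" by (simp add: diff_def fun_eq_iff)
  from Taylor[of 3 diff "\<lambda>t. t powr q" "min y 1" "max y 1" 1 y, OF _ d0 D] y
  obtain t where t: "(if y < 1 then y < t \<and> t < 1 else 1 < t \<and> t < y)"
    and eq: "y powr q = (\<Sum>m<3. (diff m 1 / fact m) * (y - 1)^m) + (diff 3 t / fact 3) * (y - 1)^3"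
    by auto
  have "t > 0" "min y 1 \<le> t" "t \<le> max y 1" using t y by (auto split: if_splits)
  moreover have "(\<Sum>m<3. (diff m 1 / fact m) * (y - 1)^m) = 1 + q * (y - 1) + q * (q - 1) / 2 * (y - 1)^2"
    by (simp add: diff_def numeral_3_eq_3 lessThan_Suc fact_numeral power2_eq_square)
  moreover have "(diff 3 t / fact 3) * (y - 1)^3 = q * (q - 1) * (q - 2) / 6 * t powr (q - 3) * (y - 1)^3"
    by (simp add: diff_def numeral_3_eq_3 lessThan_Suc fact_numeral algebra_simps)
  ultimately show ?thesis using eq by auto
qed

lemma powr_taylor_pos:
  fixes p y :: real assumes p: "0 < p" "p \<le> 1" and y: "y > 0"
  shows "y powr p \<le> 1 + p * (y - 1) - p * (1 - p) / 2 * (y - 1)^2 + p * \<bar>y - 1\<bar>^3"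
proof (cases "y = 1")
  case True then show ?thesis by simp
next
  case False
  then obtain t where t: "t > 0" "min y 1 \<le> t" "t \<le> max y 1"
    and eq: "y powr p = 1 + p * (y - 1) + p * (p - 1) / 2 * (y - 1)^2
       + p * (p - 1) * (p - 2) / 6 * t powr (p - 3) * (y - 1)^3"
    using taylor_powr3[OF y False, of p] by blast
  have c: "p * (p - 1) * (p - 2) / 6 \<ge> 0"
  proof -
    have "p * (p - 1) * (p - 2) = p * ((1 - p) * (2 - p))" by (simp add: algebra_simps)
    also have "\<dots> \<ge> 0" using p by (intro mult_nonneg_nonneg) auto
    finally show ?thesis by simp
  qed
  have "p * (p - 1) * (p - 2) / 6 * t powr (p - 3) * (y - 1)^3 \<le> p * \<bar>y - 1\<bar>^3"
  proof (cases "y > 1")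
    case True
    then have t1: "t \<ge> 1" using t by auto
    have tp: "t powr (p - 3) \<le> 1" using t1 p by (metis powr_zero_eq_one powr_mono not_one_le_zero diff_le_0_iff_le order.trans numeral_le_one_iff semiring_norm(70) linorder_not_le one_le_numeral)
    have "t powr (p - 3) \<le> 1" by (fact tp)
    have c2: "p * (p - 1) * (p - 2) / 6 \<le> p"
    proof -
      have "(1 - p) * (2 - p) \<le> 1 * 2" using p by (intro mult_mono) auto
      then have "(p - 1) * (p - 2) \<le> 6" by (simp add: algebra_simps)
      then show ?thesis using p by (simp add: mult.assoc mult_left_le)
    qed
    have "p * (p - 1) * (p - 2) / 6 * t powr (p - 3) * (y - 1)^3 \<le> p * (p - 1) * (p - 2) / 6 * 1 * (y - 1)^3"
      using True tp c by (intro mult_right_mono mult_left_mono) auto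
    also have "\<dots> \<le> p * (y - 1)^3" using c2 True by (intro mult_right_mono) auto
    finally show ?thesis using True by simp
  next
    case False
    then have "(y - 1)^3 \<le> 0" by (simp add: power_le_zero_eq_numeral)
    then have "p * (p - 1) * (p - 2) / 6 * t powr (p - 3) * (y - 1)^3 \<le> 0"
      using c by (intro mult_nonneg_nonpos) auto
    moreover have "0 \<le> p * \<bar>y - 1\<bar>^3" using p by simp
    ultimately show ?thesis by linarith
  qed
  moreover have "p * (p - 1) / 2 * (y - 1)^2 = - (p * (1 - p) / 2 * (y - 1)^2)" by (simp add: field_simps)
  ultimately show ?thesis using eq by linarith
qed

lemma powr_taylor_neg:
  fixes p y :: real assumes p: "0 < p" "p \<le> 1" and y: "y \<ge> 1/5"
  shows "y powr (-p) \<le> 1 - p * (y - 1) + p * (p + 1) / 2 * (y - 1)^2 + 625 * p * \<bar>y - 1\<bar>^3"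
proof (cases "y = 1")
  case True then show ?thesis by simp
next
  case False
  have y0: "y > 0" using y by simp
  then obtain t where t: "t > 0" "min y 1 \<le> t" "t \<le> max y 1"
    and eq: "y powr (-p) = 1 + (-p) * (y - 1) + (-p) * ((-p) - 1) / 2 * (y - 1)^2
       + (-p) * ((-p) - 1) * ((-p) - 2) / 6 * t powr ((-p) - 3) * (y - 1)^3"
    using taylor_powr3[OF y0 False, of "-p"] by blast
  have c: "p * (p + 1) * (p + 2) / 6 \<ge> 0" using p by simp
  have c2: "p * (p + 1) * (p + 2) / 6 \<le> p"
  proof -
    have "(p + 1) * (p + 2) \<le> 2 * 3" using p by (intro mult_mono) auto
    then show ?thesis using p by (simp add: mult.assoc mult_left_le)
  qed
  have e3: "(-p) * ((-p) - 1) * ((-p) - 2) / 6 = - (p * (p + 1) * (p + 2) / 6)" by (simp add: field_simps)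
  have "- (p * (p + 1) * (p + 2) / 6) * t powr ((-p) - 3) * (y - 1)^3 \<le> 625 * p * \<bar>y - 1\<bar>^3"
  proof (cases "y > 1")
    case True
    then have "(y - 1)^3 \<ge> 0" by simp
    then have "- (p * (p + 1) * (p + 2) / 6) * t powr ((-p) - 3) * (y - 1)^3 \<le> 0"
      using c by (simp add: mult_nonneg_nonneg)
    moreover have "0 \<le> 625 * p * \<bar>y - 1\<bar>^3" using p by simp
    ultimately show ?thesis by linarith
  next
    case False
    then have yl: "y < 1" using \<open>y \<noteq> 1\<close> by simp
    then have t5: "t \<ge> 1/5" using t y by auto
    have "t powr ((-p) - 3) = (1/t) powr (p + 3)"
      using t by (smt (verit) powr_divide powr_minus_divide powr_one_eq_one)
    also have "\<dots> \<le> 5 powr (p + 3)"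
      using t5 t p by (intro powr_mono2) (auto simp: field_simps)
    also have "\<dots> \<le> 5 powr 4" using p by (intro powr_mono) auto
    also have "\<dots> = 625" by (simp add: powr_numeral)
    finally have tp: "t powr ((-p) - 3) \<le> 625" .
    have w3: "(y - 1)^3 = - (\<bar>y - 1\<bar>^3)" using yl by (simp add: abs_if power3_eq_cube algebra_simps)
    have "- (p * (p + 1) * (p + 2) / 6) * t powr ((-p) - 3) * (y - 1)^3
        = (p * (p + 1) * (p + 2) / 6) * t powr ((-p) - 3) * \<bar>y - 1\<bar>^3" using w3 by simp
    also have "\<dots> \<le> p * 625 * \<bar>y - 1\<bar>^3"
      using c c2 tp by (intro mult_right_mono mult_mono) auto
    finally show ?thesis by simp
  qed
  moreover have "(-p) * ((-p) - 1) / 2 * (y - 1)^2 = p * (p + 1) / 2 * (y - 1)^2" by (simp add: field_simps)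
  ultimately show ?thesis using eq e3 by (simp only:)
qed

definition gm :: "real \<Rightarrow> nat \<Rightarrow> real" where
  "gm h k = (if even k then fact k * h^k / (2^(k div 2) * fact (k div 2)) else 0)"

lemma gauss_mom:
  assumes h: "h > 0"
  shows "has_bochner_integral lborel (\<lambda>x. normal_density 0 h x * x^k) (gm h k)"
proof (cases "even k")
  case True
  then obtain j where k: "k = 2 * j" by (auto elim: evenE)
  have "has_bochner_integral lborel (\<lambda>x. normal_density 0 h x * (x - 0) ^ (2 * j)) (fact (2 * j) / ((2 / h\<^sup>2)^j * fact j))"
    using normal_moment_even[OF h] by blast
  moreover have "fact (2 * j) / ((2 / h\<^sup>2)^j * fact j) = gm h k"
    using h by (simp add: gm_def k power_divide power_mult field_simps power_mult_distrib flip: power_mult)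
  ultimately show ?thesis by (simp add: k)
next
  case False
  then obtain j where k: "k = 2 * j + 1" by (auto elim: oddE)
  have "has_bochner_integral lborel (\<lambda>x. normal_density 0 h x * (x - 0) ^ (2 * j + 1)) 0"
    using normal_moment_odd[OF h] by blast
  then show ?thesis by (simp add: k gm_def)
qed

lemma gauss_poly_sum:
  assumes h: "h > 0"
  shows "has_bochner_integral lborel (\<lambda>x. normal_density 0 h x * (\<Sum>k\<le>n. a k * x^k)) (\<Sum>k\<le>n. a k * gm h k)"
proof -
  have "has_bochner_integral lborel (\<lambda>x. \<Sum>k\<le>n. a k * (normal_density 0 h x * x^k)) (\<Sum>k\<le>n. a k * gm h k)"
    by (intro has_bochner_integral_sum has_bochner_integral_mult_right gauss_mom h)
  then show ?thesis by (simp add: sum_distrib_left algebra_simps)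
qed

lemma gm_vals: "gm h 0 = 1" "gm h 1 = 0" "gm h (Suc 0) = 0" "gm h 2 = h^2" "gm h 3 = 0" "gm h 4 = 3 * h^4"
  "gm h 5 = 0" "gm h 6 = 15 * h^6" "gm h 7 = 0" "gm h 8 = 105 * h^8"
  by (simp_all add: gm_def fact_numeral)

lemma gauss_poly8:
  assumes h: "h > 0"
  shows "has_bochner_integral lborel (\<lambda>x. normal_density 0 h x * (a0 + a1*x + a2*x^2 + a3*x^3 + a4*x^4 + a5*x^5 + a6*x^6 + a7*x^7 + a8*x^8))
     (a0 + a2*h^2 + 3*a4*h^4 + 15*a6*h^6 + 105*a8*h^8)"
proof -
  define a where "a k = [a0,a1,a2,a3,a4,a5,a6,a7,a8] ! k" for k
  have e: "(\<Sum>k\<le>8. a k * x^k) = a0 + a1*x + a2*x^2 + a3*x^3 + a4*x^4 + a5*x^5 + a6*x^6 + a7*x^7 + a8*x^8" for x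
    by (simp add: a_def eval_nat_numeral atMost_Suc algebra_simps)
  have v: "(\<Sum>k\<le>8. a k * gm h k) = a0 + a2*h^2 + 3*a4*h^4 + 15*a6*h^6 + 105*a8*h^8"
  proof -
    have s9: "(\<Sum>k\<le>8. f k) = f 0 + f 1 + f 2 + f 3 + f 4 + f 5 + f 6 + f 7 + f (8::nat)" for f :: "nat \<Rightarrow> real"
      by (simp add: eval_nat_numeral atMost_Suc)
    show ?thesis unfolding s9 by (simp add: a_def gm_vals)
  qed
  show ?thesis using gauss_poly_sum[OF h, where n=8 and a=a] unfolding e v .
qed

lemma gauss_quad1:
  assumes h: "h > 0" and d: "d \<noteq> 0"
  shows "has_bochner_integral lborel (\<lambda>x. normal_density 0 h x * ((c + sg*x + b*(x^2 - h^2)) / d)) (c / d)"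
proof -
  have "has_bochner_integral lborel (\<lambda>x. normal_density 0 h x * (((c - b*h^2)/d) + (sg/d)*x + (b/d)*x^2 + 0*x^3 + 0*x^4 + 0*x^5 + 0*x^6 + 0*x^7 + 0*x^8))
     ((c - b*h^2)/d + (b/d)*h^2 + 3*0*h^4 + 15*0*h^6 + 105*0*h^8)"
    by (rule gauss_poly8[OF h])
  moreover have "(c - b*h^2)/d + (b/d)*h^2 + 3*0*h^4 + 15*0*h^6 + 105*0*h^8 = c / d"
    by (simp add: diff_divide_distrib)
  moreover have "((c - b*h^2)/d) + (sg/d)*x + (b/d)*x^2 + 0*x^3 + 0*x^4 + 0*x^5 + 0*x^6 + 0*x^7 + 0*x^8
     = (c + sg*x + b*(x^2 - h^2)) / d" for x
    using d by (simp add: field_simps)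
  ultimately show ?thesis by simp
qed

lemma gauss_quad2:
  assumes h: "h > 0" and d: "d \<noteq> 0"
  shows "has_bochner_integral lborel (\<lambda>x. normal_density 0 h x * ((c + sg*x + b*(x^2 - h^2)) / d)^2)
     ((c^2 + sg^2*h^2 + 2*b^2*h^4) / d^2)"
proof -
  define ee where "ee = c - b*h^2"
  have "has_bochner_integral lborel (\<lambda>x. normal_density 0 h x * (ee^2/d^2 + (2*ee* sg/d^2)*x + ((sg^2 + 2*ee*b)/d^2)*x^2 + (2* sg*b/d^2)*x^3 + (b^2/d^2)*x^4 + 0*x^5 + 0*x^6 + 0*x^7 + 0*x^8))
     (ee^2/d^2 + ((sg^2 + 2*ee*b)/d^2)*h^2 + 3*(b^2/d^2)*h^4 + 15*0*h^6 + 105*0*h^8)"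
    by (rule gauss_poly8[OF h])
  moreover have "ee^2/d^2 + ((sg^2 + 2*ee*b)/d^2)*h^2 + 3*(b^2/d^2)*h^4 + 15*0*h^6 + 105*0*h^8 = (c^2 + sg^2*h^2 + 2*b^2*h^4) / d^2"
    using d by (simp add: ee_def field_simps power2_eq_square) (simp add: algebra_simps power4_eq_xxxx)
  moreover have "ee^2/d^2 + (2*ee* sg/d^2)*x + ((sg^2 + 2*ee*b)/d^2)*x^2 + (2* sg*b/d^2)*x^3 + (b^2/d^2)*x^4 + 0*x^5 + 0*x^6 + 0*x^7 + 0*x^8
     = ((c + sg*x + b*(x^2 - h^2)) / d)^2" for x
    using d by (simp add: ee_def field_simps power2_eq_square power3_eq_cube power4_eq_xxxx)
  ultimately show ?thesis by simp
qed

definition rr :: "real \<Rightarrow> real \<Rightarrow> real \<Rightarrow> real \<Rightarrow> real \<Rightarrow> real" where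
  "rr lam sg th dt x = (1 + lam*(1-th)*dt + sg*x + sg^2/2*(x^2 - dt)) / (1 - lam*th*dt)"

locale core =
  fixes lam sg th h :: real
  assumes th0: "0 \<le> th" and th1: "th \<le> 1" and h0: "0 < h" and h1: "h \<le> 1"
    and sm: "(\<bar>lam\<bar> + sg^2) * h^2 \<le> 1/4"
begin

definition "d = 1 - lam*th*h^2"
definition "b = sg^2/2"
definition "K = 1 + \<bar>lam\<bar> + sg^2"

lemma h2_le: "h^2 \<le> h" using h0 h1 by (simp add: power2_eq_square mult_left_le)

lemma lamh: "\<bar>lam\<bar> * h^2 \<le> 1/4"
proof -
  have "\<bar>lam\<bar> * h^2 \<le> (\<bar>lam\<bar> + sg^2) * h^2" by (intro mult_right_mono) auto
  then show ?thesis using sm by linarith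
qed

lemma sgh: "sg^2 * h^2 \<le> 1/4"
proof -
  have "sg^2 * h^2 \<le> (\<bar>lam\<bar> + sg^2) * h^2" by (intro mult_right_mono) auto
  then show ?thesis using sm by linarith
qed

lemma lth: "\<bar>lam*th*h^2\<bar> \<le> \<bar>lam\<bar> * h^2"
proof -
  have "\<bar>lam*th*h^2\<bar> = \<bar>lam\<bar> * th * h^2" using th0 by (simp add: abs_mult)
  also have "\<dots> \<le> \<bar>lam\<bar> * 1 * h^2" using th1 th0 by (intro mult_right_mono mult_left_mono) auto
  finally show ?thesis by simp
qed

lemma d_lo: "d \<ge> 3/4" and d_hi: "d \<le> 5/4" and d_pos: "d > 0"
  using lth lamh unfolding d_def by (auto simp: abs_le_iff)

lemma rr_eq: "rr lam sg th (h^2) x = (1 + lam*(1-th)*h^2 + sg*x + b*(x^2 - h^2)) / d"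
  by (simp add: rr_def d_def b_def)

lemma w_eq: "rr lam sg th (h^2) x - 1 = (lam*h^2 + sg*x + b*(x^2 - h^2)) / d"
  using d_pos by (simp add: rr_eq field_simps d_def)

lemma rr_ge: "rr lam sg th (h^2) x \<ge> 1/5"
proof -
  have num: "1 + lam*(1-th)*h^2 + sg*x + b*(x^2 - h^2) = (1 + sg*x)^2/2 + 1/2 + lam*(1-th)*h^2 - sg^2*h^2/2"
    by (simp add: b_def power2_eq_square field_simps)
  have "\<bar>lam*(1-th)*h^2\<bar> \<le> \<bar>lam\<bar> * h^2"
  proof -
    have "\<bar>lam*(1-th)*h^2\<bar> = \<bar>lam\<bar> * (1-th) * h^2" using th1 by (simp add: abs_mult)
    also have "\<dots> \<le> \<bar>lam\<bar> * 1 * h^2" using th1 th0 by (intro mult_right_mono mult_left_mono) auto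
    finally show ?thesis by simp
  qed
  then have "1 + lam*(1-th)*h^2 + sg*x + b*(x^2 - h^2) \<ge> 1/4"
  proof -
    assume a: "\<bar>lam*(1-th)*h^2\<bar> \<le> \<bar>lam\<bar> * h^2"
    have "(1 + sg*x)^2/2 \<ge> 0" by simp
    moreover have "\<bar>lam\<bar> * h^2 + sg^2*h^2/2 \<le> 1/4"
    proof -
      have "0 \<le> sg^2*h^2" by simp
      moreover have "(\<bar>lam\<bar> + sg^2) * h^2 = \<bar>lam\<bar> * h^2 + sg^2*h^2" by (simp add: algebra_simps)
      ultimately show ?thesis using sm by linarith
    qed
    moreover have "- (\<bar>lam\<bar> * h^2) \<le> lam*(1-th)*h^2" using a by (simp add: abs_le_iff)
    ultimately show ?thesis unfolding num by linarith
  qed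
  then have "(1 + lam*(1-th)*h^2 + sg*x + b*(x^2 - h^2)) / d \<ge> (1/4) / (5/4)"
    using d_pos d_hi by (intro frac_le) auto
  then show ?thesis by (simp add: rr_eq)
qed

definition "dl = \<bar>lam\<bar> * h^2"

lemma dl_ge: "dl \<ge> 0" and dl_le: "dl \<le> 1/4" using lamh by (auto simp: dl_def)

lemma d_range: "1 - dl \<le> d" "d \<le> 1 + dl"
  using lth unfolding d_def dl_def by (auto simp: abs_le_iff)

lemma invd2_lo: "1 / d^2 \<ge> 1 - 2 * dl"
proof -
  have "d^2 \<le> (1 + dl)^2" using d_range d_pos by (intro power_mono) auto
  moreover have "(1 - 2*dl) * (1 + dl)^2 \<le> 1"
  proof -
    have "(1 - 2*dl) * (1 + dl)^2 = 1 - 3*dl^2 - 2*dl^3" by (simp add: power2_eq_square power3_eq_cube algebra_simps)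
    moreover have "0 \<le> 3*dl^2 + 2*dl^3" using dl_ge by simp
    ultimately show ?thesis by linarith
  qed
  ultimately have "(1 - 2*dl) * d^2 \<le> 1"
  proof -
    assume a: "d^2 \<le> (1 + dl)^2" "(1 - 2*dl) * (1 + dl)^2 \<le> 1"
    have "(1 - 2*dl) * d^2 \<le> (1 - 2*dl) * (1 + dl)^2" using a(1) dl_le by (intro mult_left_mono) auto
    then show ?thesis using a(2) by linarith
  qed
  then show ?thesis using d_pos by (simp add: field_simps)
qed

lemma invd2_hi: "1 / d^2 \<le> 1 + 4 * dl"
proof -
  have "(1 - dl)^2 \<le> d^2" using d_range dl_le by (intro power_mono) auto
  moreover have "(1 + 4*dl) * (1 - dl)^2 \<ge> 1"
  proof -
    have "(1 + 4*dl) * (1 - dl)^2 = 1 + dl * (2 - 7*dl + 4*dl^2)" by (simp add: power2_eq_square algebra_simps)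
    moreover have "2 - 7*dl + 4*dl^2 \<ge> 0" using dl_le dl_ge
    proof -
      have "7*dl \<le> 7/4" using dl_le by simp
      moreover have "0 \<le> 4*dl^2" by simp
      ultimately show ?thesis by linarith
    qed
    ultimately show ?thesis using dl_ge by simp
  qed
  ultimately have "(1 + 4*dl) * d^2 \<ge> 1"
  proof -
    assume a: "(1 - dl)^2 \<le> d^2" "(1 + 4*dl) * (1 - dl)^2 \<ge> 1"
    have "(1 + 4*dl) * (1 - dl)^2 \<le> (1 + 4*dl) * d^2" using a(1) dl_ge by (intro mult_left_mono) auto
    then show ?thesis using a(2) by linarith
  qed
  then show ?thesis using d_pos by (simp add: field_simps)
qed

lemma invd2_2: "1 / d^2 \<le> 2"
  using invd2_hi dl_le by linarith

lemma K_ge1: "K \<ge> 1" and lam_K: "\<bar>lam\<bar> \<le> K" and sg_K: "sg^2 \<le> K"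
  unfolding K_def by auto

lemma K_le_K2: "K \<le> K^2"
  using K_ge1 by (simp add: power2_eq_square)

lemma K2_le_K4: "K^2 \<le> K^4"
proof -
  have "K^2 * 1 \<le> K^2 * K^2" using K_ge1 K_le_K2 by (intro mult_left_mono) auto
  then show ?thesis by (simp add: power4_eq_xxxx power2_eq_square mult.assoc)
qed

definition "S2 = ((lam*h^2)^2 + sg^2*h^2 + 2*b^2*h^4)/d^2"
definition "E4 = (lam - b)^4*h^8 + 3* sg^4*h^4 + 105*b^4*h^8"
definition "W4 x = (lam - b)^4*h^8 + sg^4*x^4 + b^4*x^8"
definition "w x = rr lam sg th (h^2) x - 1"

lemma pow4_sum3: fixes a b c :: real shows "(a+b+c)^4 \<le> 27*(a^4+b^4+c^4)"
proof -
  have 1: "(a+b+c)^2 \<le> 3*(a^2+b^2+c^2)"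
  proof -
    have "3*(a^2+b^2+c^2) - (a+b+c)^2 = (a-b)^2 + (b-c)^2 + (a-c)^2" by (simp add: power2_eq_square algebra_simps)
    moreover have "(a-b)^2 + (b-c)^2 + (a-c)^2 \<ge> 0" by simp
    ultimately show ?thesis by linarith
  qed
  have 2: "(a^2+b^2+c^2)^2 \<le> 3*(a^4+b^4+c^4)"
  proof -
    have "3*(a^4+b^4+c^4) - (a^2+b^2+c^2)^2 = (a^2-b^2)^2 + (b^2-c^2)^2 + (a^2-c^2)^2"
      by (simp add: power2_eq_square power4_eq_xxxx algebra_simps)
    moreover have "(a^2-b^2)^2 + (b^2-c^2)^2 + (a^2-c^2)^2 \<ge> 0" by simp
    ultimately show ?thesis by linarith
  qed
  have "(a+b+c)^4 = ((a+b+c)^2)^2" by (simp flip: power_mult)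
  also have "\<dots> \<le> (3*(a^2+b^2+c^2))^2" using 1 by (intro power_mono) auto
  also have "\<dots> = 9 * (a^2+b^2+c^2)^2" by (simp add: power2_eq_square algebra_simps)
  also have "\<dots> \<le> 9 * (3*(a^4+b^4+c^4))" using 2 by simp
  finally show ?thesis by simp
qed

lemma w_eq2: "w x = ((lam - b)*h^2 + sg*x + b*x^2) / d"
  unfolding w_def w_eq by (simp add: algebra_simps)

lemma W4_nonneg: "W4 x \<ge> 0"
  unfolding W4_def by (intro add_nonneg_nonneg) (auto simp: zero_le_mult_iff)

lemma w4_le: "(w x)^4 \<le> 432 * W4 x"
proof -
  define N where "N = (lam - b)*h^2 + sg*x + b*x^2"
  have "(w x)^4 = N^4 * (1/d^2)^2" by (simp add: w_eq2 N_def power_divide power4_eq_xxxx power2_eq_square)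
  also have "\<dots> \<le> N^4 * 2^2" using invd2_2 d_pos
    by (intro mult_left_mono power_mono) auto
  also have "\<dots> = 4 * N^4" by simp
  also have "N^4 \<le> 27 * W4 x"
  proof -
    have "N^4 \<le> 27*(((lam - b)*h^2)^4 + (sg*x)^4 + (b*x^2)^4)" unfolding N_def by (rule pow4_sum3)
    also have "\<dots> = 27 * W4 x" by (simp add: W4_def power_mult_distrib flip: power_mult)
    finally show ?thesis .
  qed
  then have "4 * N^4 \<le> 4 * (27 * W4 x)" by simp
  finally show ?thesis using W4_nonneg[of x] by linarith
qed

lemma w3_le: "h * \<bar>w x\<bar>^3 \<le> h^2/2 * (w x)^2 + (w x)^4 / 2"
proof -
  have "0 \<le> (h*\<bar>w x\<bar> - (w x)^2)^2" by simp
  also have "(h*\<bar>w x\<bar> - (w x)^2)^2 = h^2*(w x)^2 - 2*(h*\<bar>w x\<bar>^3) + (w x)^4"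
    by (simp add: power2_eq_square power3_eq_cube power4_eq_xxxx algebra_simps)
  finally show ?thesis by simp
qed

lemma up_pt: "rr lam sg th (h^2) x powr h \<le> 1 + h * w x + (h^2/2 - h*(1-h)/2) * (w x)^2 + 216 * W4 x"
proof -
  have r0: "rr lam sg th (h^2) x > 0" using rr_ge[of x] by linarith
  have "rr lam sg th (h^2) x powr h \<le> 1 + h * w x - h*(1-h)/2 * (w x)^2 + h * \<bar>w x\<bar>^3"
    using powr_taylor_pos[OF h0 h1 r0] unfolding w_def by simp
  also have "\<dots> \<le> 1 + h * w x - h*(1-h)/2 * (w x)^2 + (h^2/2 * (w x)^2 + 432 * W4 x / 2)"
    using w3_le[of x] w4_le[of x] by simp
  finally show ?thesis by (simp add: algebra_simps)
qed

lemma lo_pt: "rr lam sg th (h^2) x powr (-h) \<le> 1 - h * w x + (h*(h+1)/2 + 625*h^2/2) * (w x)^2 + 135000 * W4 x"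
proof -
  have "rr lam sg th (h^2) x powr (-h) \<le> 1 - h * w x + h*(h+1)/2 * (w x)^2 + 625 * h * \<bar>w x\<bar>^3"
    using powr_taylor_neg[OF h0 h1 rr_ge[of x]] unfolding w_def by simp
  also have "\<dots> \<le> 1 - h * w x + h*(h+1)/2 * (w x)^2 + 625 * (h^2/2 * (w x)^2 + 432 * W4 x / 2)"
    using w3_le[of x] w4_le[of x] by simp
  finally show ?thesis by (simp add: algebra_simps)
qed

abbreviation "nd \<equiv> normal_density 0 h"

lemma I1: "has_bochner_integral lborel (\<lambda>x. nd x) 1"
  using integrable_normal_density[OF h0, of 0] integral_normal_density[OF h0, of 0]
  by (simp add: has_bochner_integral_iff)

lemma Iw: "has_bochner_integral lborel (\<lambda>x. nd x * w x) (lam*h^2/d)"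
  using gauss_quad1[OF h0, of d "lam*h^2" sg b] d_pos unfolding w_def w_eq by simp

lemma Iw2: "has_bochner_integral lborel (\<lambda>x. nd x * (w x)^2) S2"
  using gauss_quad2[OF h0, of d "lam*h^2" sg b] d_pos unfolding w_def w_eq S2_def by simp

lemma IW4: "has_bochner_integral lborel (\<lambda>x. nd x * W4 x) E4"
proof -
  have "has_bochner_integral lborel (\<lambda>x. nd x * ((lam - b)^4*h^8 + 0*x + 0*x^2 + 0*x^3 + sg^4*x^4 + 0*x^5 + 0*x^6 + 0*x^7 + b^4*x^8))
     ((lam - b)^4*h^8 + 0*h^2 + 3* sg^4*h^4 + 15*0*h^6 + 105*b^4*h^8)"
    by (rule gauss_poly8[OF h0])
  then show ?thesis by (simp add: W4_def E4_def)
qed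

lemma I_comb:
  "has_bochner_integral lborel (\<lambda>x. nd x * (1 + u1 * w x + u2 * (w x)^2 + u3 * W4 x))
     (1 + u1 * (lam*h^2/d) + u2 * S2 + u3 * E4)"
proof -
  have "has_bochner_integral lborel (\<lambda>x. nd x + u1 * (nd x * w x) + u2 * (nd x * (w x)^2) + u3 * (nd x * W4 x))
     (1 + u1 * (lam*h^2/d) + u2 * S2 + u3 * E4)"
    by (intro has_bochner_integral_add has_bochner_integral_mult_right I1 Iw Iw2 IW4)
  then show ?thesis by (simp add: algebra_simps)
qed

lemma rr_meas: "(\<lambda>x. rr lam sg th (h^2) x) \<in> borel_measurable borel"
  unfolding rr_def by measurable

lemma E_up:
  "integrable lborel (\<lambda>x. nd x * rr lam sg th (h^2) x powr h)"
  "(\<integral>x. nd x * rr lam sg th (h^2) x powr h \<partial>lborel) \<le>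
     1 + h * (lam*h^2/d) + (h^2/2 - h*(1-h)/2) * S2 + 216 * E4"
proof -
  let ?F = "\<lambda>x. nd x * (1 + h * w x + (h^2/2 - h*(1-h)/2) * (w x)^2 + 216 * W4 x)"
  have I: "has_bochner_integral lborel ?F (1 + h * (lam*h^2/d) + (h^2/2 - h*(1-h)/2) * S2 + 216 * E4)"
    by (rule I_comb)
  have pt: "nd x * rr lam sg th (h^2) x powr h \<le> ?F x" for x
    using up_pt[of x] by (intro mult_left_mono) auto
  have nn: "0 \<le> nd x * rr lam sg th (h^2) x powr h" for x by simp
  have meas: "(\<lambda>x. nd x * rr lam sg th (h^2) x powr h) \<in> borel_measurable lborel"
    using rr_meas by measurable
  show int: "integrable lborel (\<lambda>x. nd x * rr lam sg th (h^2) x powr h)"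
  proof (rule Bochner_Integration.integrable_bound[where f="?F"])
    show "integrable lborel ?F" using I by (simp add: has_bochner_integral_iff)
    show "(\<lambda>x. nd x * rr lam sg th (h^2) x powr h) \<in> borel_measurable lborel" by (rule meas)
    show "AE x in lborel. norm (nd x * rr lam sg th (h^2) x powr h) \<le> norm (?F x)"
    proof (intro AE_I2)
      fix x
      have "norm (nd x * rr lam sg th (h^2) x powr h) = nd x * rr lam sg th (h^2) x powr h"
        using nn[of x] by simp
      also have "\<dots> \<le> ?F x" by (rule pt)
      also have "\<dots> \<le> norm (?F x)" unfolding real_norm_def by (rule abs_ge_self)
      finally show "norm (nd x * rr lam sg th (h^2) x powr h) \<le> norm (?F x)" .
    qed
  qed
  have "(\<integral>x. nd x * rr lam sg th (h^2) x powr h \<partial>lborel) \<le> integral\<^sup>L lborel ?F"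
    using I pt nn by (intro integral_mono') (auto simp: has_bochner_integral_iff intro: order_trans[OF nn pt])
  then show "(\<integral>x. nd x * rr lam sg th (h^2) x powr h \<partial>lborel) \<le> 1 + h * (lam*h^2/d) + (h^2/2 - h*(1-h)/2) * S2 + 216 * E4"
    using I by (simp add: has_bochner_integral_iff)
qed

lemma E_lo:
  "integrable lborel (\<lambda>x. nd x * rr lam sg th (h^2) x powr (-h))"
  "(\<integral>x. nd x * rr lam sg th (h^2) x powr (-h) \<partial>lborel) \<le>
     1 + (-h) * (lam*h^2/d) + (h*(h+1)/2 + 625*h^2/2) * S2 + 135000 * E4"
proof -
  let ?F = "\<lambda>x. nd x * (1 + (-h) * w x + (h*(h+1)/2 + 625*h^2/2) * (w x)^2 + 135000 * W4 x)"
  have I: "has_bochner_integral lborel ?F (1 + (-h) * (lam*h^2/d) + (h*(h+1)/2 + 625*h^2/2) * S2 + 135000 * E4)"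
    by (rule I_comb)
  have pt: "nd x * rr lam sg th (h^2) x powr (-h) \<le> ?F x" for x
    using lo_pt[of x] by (intro mult_left_mono) auto
  have nn: "0 \<le> nd x * rr lam sg th (h^2) x powr (-h)" for x by simp
  have meas: "(\<lambda>x. nd x * rr lam sg th (h^2) x powr (-h)) \<in> borel_measurable lborel"
    using rr_meas by measurable
  show int: "integrable lborel (\<lambda>x. nd x * rr lam sg th (h^2) x powr (-h))"
  proof (rule Bochner_Integration.integrable_bound[where f="?F"])
    show "integrable lborel ?F" using I by (simp add: has_bochner_integral_iff)
    show "(\<lambda>x. nd x * rr lam sg th (h^2) x powr (-h)) \<in> borel_measurable lborel" by (rule meas)
    show "AE x in lborel. norm (nd x * rr lam sg th (h^2) x powr (-h)) \<le> norm (?F x)"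
    proof (intro AE_I2)
      fix x
      have "norm (nd x * rr lam sg th (h^2) x powr (-h)) = nd x * rr lam sg th (h^2) x powr (-h)"
        using nn[of x] by simp
      also have "\<dots> \<le> ?F x" by (rule pt)
      also have "\<dots> \<le> norm (?F x)" unfolding real_norm_def by (rule abs_ge_self)
      finally show "norm (nd x * rr lam sg th (h^2) x powr (-h)) \<le> norm (?F x)" .
    qed
  qed
  have Fnn: "0 \<le> ?F x" for x using order_trans[OF nn pt] .
  have "(\<integral>x. nd x * rr lam sg th (h^2) x powr (-h) \<partial>lborel) \<le> integral\<^sup>L lborel ?F"
    using I by (intro integral_mono' pt Fnn) (auto simp: has_bochner_integral_iff)
  then show "(\<integral>x. nd x * rr lam sg th (h^2) x powr (-h) \<partial>lborel) \<le> 1 + (-h) * (lam*h^2/d) + (h*(h+1)/2 + 625*h^2/2) * S2 + 135000 * E4"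
    using I by (simp add: has_bochner_integral_iff)
qed

lemma h5: "h^5 = h * h^4" by (simp add: eval_nat_numeral)

lemma hpows: "h^4 \<le> h^3" "h^5 \<le> h^4" "h^4 \<le> h^2" "h^8 \<le> h^4" "h^3 \<le> h^2"
  using h0 h1 by (auto intro: power_decreasing)

lemma lam2K: "lam^2 \<le> K^2"
  using lam_K by (metis abs_ge_zero power2_abs power_mono)

lemma sg4K: "sg^4 \<le> K^2"
proof -
  have "(sg^2)^2 \<le> K^2" using sg_K by (intro power_mono) auto
  then show ?thesis by (simp flip: power_mult)
qed

lemma sglK: "sg^2 * \<bar>lam\<bar> \<le> K^2"
  using mult_mono[OF sg_K lam_K] K_ge1 by (simp add: power2_eq_square)

lemma b_def2: "b^2 = sg^4/4" by (simp add: b_def power_divide flip: power_mult)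

lemma E4_le: "E4 \<le> 109 * K^4 * h^4"
proof -
  have lb: "\<bar>lam - b\<bar> \<le> K"
  proof -
    have "0 \<le> sg^2" by simp
    moreover have "lam \<le> \<bar>lam\<bar>" "-lam \<le> \<bar>lam\<bar>" by auto
    ultimately show ?thesis unfolding b_def K_def abs_le_iff by linarith
  qed
  have 1: "(lam - b)^4 \<le> K^4"
    using power_mono[OF lb, of 4] by (simp add: power_even_abs)
  have 2: "b^4 \<le> K^4"
  proof -
    have "b \<le> K" "0 \<le> b" unfolding b_def K_def by auto
    then show ?thesis by (intro power_mono) auto
  qed
  have 3: "sg^4 \<le> K^4" using sg4K K2_le_K4 by linarith
  have "E4 \<le> K^4*h^4 + 3*(K^4*h^4) + 105*(K^4*h^4)"
  proof -
    have a: "(lam - b)^4*h^8 \<le> K^4*h^4" using 1 hpows by (intro mult_mono) auto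
    have c: "b^4*h^8 \<le> K^4*h^4" using 2 hpows by (intro mult_mono) auto
    have bb: "sg^4*h^4 \<le> K^4*h^4" using 3 by (intro mult_right_mono) auto
    have bb': "3*(sg^4*h^4) \<le> 3*(K^4*h^4)" using bb by simp
    have c': "105*(b^4*h^8) \<le> 105*(K^4*h^4)" using c by simp
    show ?thesis unfolding E4_def using a bb' c' by (simp add: algebra_simps)
  qed
  then show ?thesis by (simp add: algebra_simps)
qed

lemma S2_le: "S2 \<le> 6 * K^2 * h^2"
proof -
  have "S2 = ((lam*h^2)^2 + sg^2*h^2 + 2*b^2*h^4) * (1/d^2)" by (simp add: S2_def)
  also have "\<dots> \<le> (K^2*h^2 + K^2*h^2 + K^2*h^2) * 2"
  proof (intro mult_mono invd2_2)
    have a: "(lam*h^2)^2 \<le> K^2*h^2"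
    proof -
      have "(lam*h^2)^2 = lam^2 * h^4" by (simp add: power_mult_distrib flip: power_mult)
      also have "\<dots> \<le> K^2 * h^2" using lam2K hpows by (intro mult_mono) auto
      finally show ?thesis .
    qed
    have bb: "sg^2*h^2 \<le> K^2*h^2" using sg_K K_le_K2 by (intro mult_right_mono) auto
    have c: "2*b^2*h^4 \<le> K^2*h^2"
    proof -
      have "2*b^2*h^4 = (sg^4/2) * h^4" by (simp add: b_def2)
      also have "\<dots> \<le> K^2 * h^2"
      proof -
        have "sg^4/2 \<le> K^2" using sg4K zero_le_power2[of K] by linarith
        then show ?thesis using hpows by (intro mult_mono) auto
      qed
      finally show ?thesis .
    qed
    show "(lam*h^2)^2 + sg^2*h^2 + 2*b^2*h^4 \<le> K^2*h^2 + K^2*h^2 + K^2*h^2" using a bb c by linarith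
  qed (auto)
  finally show ?thesis by (simp add: algebra_simps)
qed

lemma S2_lo: "S2 \<ge> sg^2*h^2 - 2 * (sg^2*\<bar>lam\<bar>) * h^4"
proof -
  have "S2 \<ge> sg^2*h^2 * (1/d^2)"
    unfolding S2_def by (simp add: divide_right_mono)
  moreover have "sg^2*h^2 * (1/d^2) \<ge> sg^2*h^2 * (1 - 2*dl)"
    using invd2_lo by (intro mult_left_mono) auto
  moreover have "sg^2*h^2 * (1 - 2*dl) = sg^2*h^2 - 2 * (sg^2*\<bar>lam\<bar>) * h^4"
    by (simp add: dl_def algebra_simps power4_eq_xxxx power2_eq_square)
  ultimately show ?thesis by linarith
qed

lemma S2_hi: "S2 \<le> sg^2*h^2 + (4 * (sg^2*\<bar>lam\<bar>) + 2 * lam^2 + sg^4) * h^4"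
proof -
  have "S2 = (sg^2*h^2 + (lam^2 + 2*b^2) * h^4) / d^2"
    by (simp add: S2_def power_mult_distrib algebra_simps flip: power_mult)
  also have "\<dots> = sg^2*h^2 * (1/d^2) + (lam^2 + 2*b^2) * h^4 * (1/d^2)"
    by (simp add: add_divide_distrib)
  also have "\<dots> \<le> sg^2*h^2 * (1 + 4*dl) + (lam^2 + 2*b^2) * h^4 * 2"
    using invd2_hi invd2_2 by (intro add_mono mult_left_mono) auto
  also have "\<dots> = sg^2*h^2 + (4 * (sg^2*\<bar>lam\<bar>) + 2 * lam^2 + sg^4) * h^4"
    by (simp add: dl_def b_def algebra_simps power4_eq_xxxx power2_eq_square)
  finally show ?thesis .
qed

lemma lamd: "lam*h^2/d = lam*h^2 + lam^2*th*h^4/d"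
  using d_pos by (simp add: d_def field_simps power2_eq_square power4_eq_xxxx)

lemma lamd_nn: "lam^2*th*h^4/d \<ge> 0" using th0 d_pos by simp

lemma lamd_hi: "h * (lam^2*th*h^4/d) \<le> 2 * K^2 * h^4"
proof -
  have "th / d \<le> 1 / (3/4)" using th0 th1 d_lo by (intro frac_le) auto
  then have "th / d \<le> 4/3" by simp
  then have td: "th / d \<le> 2" by linarith
  have "h * (lam^2*th*h^4/d) = (lam^2 * h^5) * (th/d)" by (simp add: h5)
  also have "\<dots> \<le> (K^2 * h^4) * 2" using td lam2K hpows th0 d_pos h0 by (intro mult_mono) auto
  finally show ?thesis by simp
qed

definition "CU = 24000 * K^4"
definition "CL = 15000000 * K^4"

lemma VU_bound:
  "1 + h * (lam*h^2/d) + (h^2/2 - h*(1-h)/2) * S2 + 216 * E4 \<le> 1 + h^3*(lam - sg^2/2) + CU * h^4"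
proof -
  have e1: "h * (lam*h^2/d) = h^3*lam + h*(lam^2*th*h^4/d)"
    unfolding lamd by (simp add: algebra_simps power3_eq_cube power2_eq_square)
  have e2: "(h^2/2 - h*(1-h)/2) * S2 = -(h/2)*S2 + h^2*S2" by (simp add: field_simps power2_eq_square)
  have a4: "-(h/2)*S2 \<le> -(h^3* sg^2/2) + K^2*h^4"
  proof -
    have "(h/2)*S2 \<ge> (h/2)*(sg^2*h^2 - 2 * (sg^2*\<bar>lam\<bar>) * h^4)"
      using S2_lo h0 by (intro mult_left_mono) auto
    moreover have "(h/2)*(sg^2*h^2 - 2 * (sg^2*\<bar>lam\<bar>) * h^4) = h^3* sg^2/2 - (sg^2*\<bar>lam\<bar>) * h^5"
      by (simp add: h5 algebra_simps power2_eq_square power3_eq_cube)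
    moreover have "(sg^2*\<bar>lam\<bar>) * h^5 \<le> K^2*h^4" using sglK hpows h0 by (intro mult_mono) auto
    ultimately show ?thesis by linarith
  qed
  have a5: "h^2*S2 \<le> 6*K^2*h^4"
  proof -
    have "h^2*S2 \<le> h^2*(6 * K^2 * h^2)" using S2_le by (intro mult_left_mono) auto
    then show ?thesis by (simp add: algebra_simps power4_eq_xxxx power2_eq_square)
  qed
  have a6: "216*E4 \<le> 23544*K^4*h^4" using E4_le by linarith
  have a7: "K^2*h^4 \<le> K^4*h^4" using K2_le_K4 by (intro mult_right_mono) auto
  have "h^3*(lam - sg^2/2) = h^3*lam - h^3* sg^2/2" by (simp add: algebra_simps)
  moreover have "0 \<le> K^4*h^4" by simp
  ultimately show ?thesis unfolding CU_def using e1 e2 a4 a5 a6 a7 lamd_hi by linarith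
qed

lemma VL_bound:
  "1 + (-h) * (lam*h^2/d) + (h*(h+1)/2 + 625*h^2/2) * S2 + 135000 * E4 \<le> 1 - h^3*(lam - sg^2/2) + CL * h^4"
proof -
  have e1: "(-h) * (lam*h^2/d) = -(h^3*lam) - h*(lam^2*th*h^4/d)"
    unfolding lamd by (simp add: algebra_simps power3_eq_cube power2_eq_square)
  have n1: "h*(lam^2*th*h^4/d) \<ge> 0" using mult_nonneg_nonneg[OF less_imp_le[OF h0] lamd_nn] .
  have e2: "(h*(h+1)/2 + 625*h^2/2) * S2 = (h/2)*S2 + 313*(h^2*S2)" by (simp add: field_simps power2_eq_square)
  have a4: "(h/2)*S2 \<le> h^3* sg^2/2 + 4*K^2*h^4"
  proof -
    have "(h/2)*S2 \<le> (h/2)*(sg^2*h^2 + (4 * (sg^2*\<bar>lam\<bar>) + 2 * lam^2 + sg^4) * h^4)"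
      using S2_hi h0 by (intro mult_left_mono) auto
    moreover have "(h/2)*(sg^2*h^2 + (4 * (sg^2*\<bar>lam\<bar>) + 2 * lam^2 + sg^4) * h^4) = h^3* sg^2/2 + ((4 * (sg^2*\<bar>lam\<bar>) + 2 * lam^2 + sg^4)/2) * h^5"
      by (simp add: h5 algebra_simps power2_eq_square power3_eq_cube)
    moreover have "((4 * (sg^2*\<bar>lam\<bar>) + 2 * lam^2 + sg^4)/2) * h^5 \<le> (4*K^2) * h^4"
    proof -
      have "4 * (sg^2*\<bar>lam\<bar>) + 2 * lam^2 + sg^4 \<le> 8*K^2" using sglK lam2K sg4K zero_le_power2[of K] by linarith
      then have "(4 * (sg^2*\<bar>lam\<bar>) + 2 * lam^2 + sg^4)/2 \<le> 4*K^2" by simp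
      moreover have "0 \<le> (4 * (sg^2*\<bar>lam\<bar>) + 2 * lam^2 + sg^4)/2" by simp
      ultimately show ?thesis using hpows h0 by (intro mult_mono) auto
    qed
    ultimately show ?thesis by linarith
  qed
  have a5: "h^2*S2 \<le> 6*K^2*h^4"
  proof -
    have "h^2*S2 \<le> h^2*(6 * K^2 * h^2)" using S2_le by (intro mult_left_mono) auto
    then show ?thesis by (simp add: algebra_simps power4_eq_xxxx power2_eq_square)
  qed
  have a6: "135000*E4 \<le> 14715000*K^4*h^4" using E4_le by linarith
  have a7: "K^2*h^4 \<le> K^4*h^4" using K2_le_K4 by (intro mult_right_mono) auto
  have "h^3*(lam - sg^2/2) = h^3*lam - h^3* sg^2/2" by (simp add: algebra_simps)
  moreover have "0 \<le> K^4*h^4" by simp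
  ultimately show ?thesis unfolding CL_def using e1 n1 e2 a4 a5 a6 a7 by linarith
qed

definition "AA = ((1 + lam*(1-th)*h^2)^2 + sg^2*h^2 + 2*b^2*h^4)/d^2"

lemma I_ms: "has_bochner_integral lborel (\<lambda>x. nd x * (rr lam sg th (h^2) x)^2) AA"
  using gauss_quad2[OF h0, of d "1 + lam*(1-th)*h^2" sg b] d_pos unfolding rr_eq AA_def by simp

definition "CA = 50 * K^4"

lemma ln_ge: "(x::real) > 0 \<Longrightarrow> ln x \<ge> (x - 1) / x"
  using ln_le_minus_one[of "1/x"] by (simp add: ln_div field_simps)

lemma lnAA: "\<bar>ln AA - (2*lam + sg^2)*h^2\<bar> \<le> CA * h^4"
proof -
  define c where "c = 1 + lam*(1-th)*h^2"
  define N where "N = c^2 + sg^2*h^2 + 2*b^2*h^4"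
  define u where "u = N - 1"
  have c_lo: "c \<ge> 3/4"
  proof -
    have "\<bar>lam*(1-th)*h^2\<bar> = \<bar>lam\<bar> * (1-th) * h^2" using th1 by (simp add: abs_mult)
    also have "\<dots> \<le> \<bar>lam\<bar> * 1 * h^2" using th1 th0 by (intro mult_right_mono mult_left_mono) auto
    finally show ?thesis using lamh unfolding c_def by (auto simp: abs_le_iff)
  qed
  have N_lo: "N \<ge> 1/2"
  proof -
    have "c^2 \<ge> (3/4)^2" using c_lo by (intro power_mono) auto
    moreover have "0 \<le> sg^2*h^2 + 2*b^2*h^4" by simp
    moreover have "(3/4::real)^2 = 9/16" by (simp add: power2_eq_square)
    ultimately show ?thesis unfolding N_def by linarith
  qed
  have AAe: "AA = N / d^2" unfolding AA_def N_def c_def by simp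
  have lnA: "ln AA = ln N - 2 * ln d"
    using N_lo d_pos by (simp add: AAe ln_div ln_realpow)
  have u_eq: "u = (2*lam*(1-th) + sg^2)*h^2 + (lam^2*(1-th)^2 + sg^4/2)*h^4"
    unfolding u_def N_def c_def by (simp add: b_def power2_eq_square power4_eq_xxxx field_simps)
  have lnN_up: "ln N \<le> u" using ln_le_minus_one[of N] N_lo unfolding u_def by simp
  have lnd_lo: "ln d \<ge> (d - 1)/d" using ln_ge d_pos by simp
  have dd: "(d - 1)/d = -(lam*th*h^2) - lam^2*th^2*h^4/d"
    using d_pos by (simp add: d_def field_simps power2_eq_square power4_eq_xxxx)
  have t1: "lam^2*th^2*h^4/d \<le> 2 * K^2 * h^4"
  proof -
    have "th^2 / d \<le> 1 / (3/4)" using th0 th1 d_lo by (intro frac_le) (auto simp: power_le_one)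
    then have "th^2 / d \<le> 4/3" by simp
    then have td: "th^2 / d \<le> 2" by linarith
    have "lam^2*th^2*h^4/d = (lam^2 * h^4) * (th^2/d)" by simp
    also have "\<dots> \<le> (K^2 * h^4) * 2" using td lam2K d_pos by (intro mult_mono) auto
    finally show ?thesis by simp
  qed
  have t2: "lam^2*(1-th)^2*h^4 \<le> K^2 * h^4"
  proof -
    have "(1-th)^2 \<le> 1" using th0 th1 by (simp add: power_le_one)
    then have "lam^2*(1-th)^2 \<le> K^2 * 1" using lam2K by (intro mult_mono) auto
    then show ?thesis by (intro mult_right_mono) auto
  qed
  have t3: "sg^4/2*h^4 \<le> K^2 * h^4"
  proof -
    have "sg^4/2 \<le> K^2" using sg4K zero_le_power2[of K] by linarith
    then show ?thesis by (intro mult_right_mono) auto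
  qed
  have up: "ln AA - (2*lam + sg^2)*h^2 \<le> 6 * K^2 * h^4"
  proof -
    have "ln AA \<le> u + 2*(lam*th*h^2) + 2*(lam^2*th^2*h^4/d)" using lnA lnN_up lnd_lo dd by linarith
    moreover have "u + 2*(lam*th*h^2) = (2*lam + sg^2)*h^2 + lam^2*(1-th)^2*h^4 + sg^4/2*h^4"
      unfolding u_eq by (simp add: algebra_simps)
    ultimately show ?thesis using t1 t2 t3 by linarith
  qed
  have lnN_lo: "ln N \<ge> u - 2*u^2"
  proof -
    have "ln N \<ge> (N - 1)/N" using ln_ge N_lo by simp
    moreover have "(N - 1)/N = u - u^2/N" using N_lo unfolding u_def by (simp add: field_simps power2_eq_square)
    moreover have "u^2/N \<le> u^2 / (1/2)" using N_lo by (intro divide_left_mono) auto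
    ultimately show ?thesis by simp
  qed
  have lnd_up: "ln d \<le> d - 1" using ln_le_minus_one d_pos by simp
  have u_abs: "\<bar>u\<bar> \<le> 5 * K^2 * h^2"
  proof -
    have "\<bar>2*lam*(1-th)\<bar> \<le> 2*K"
    proof -
      have "\<bar>2*lam*(1-th)\<bar> = 2*\<bar>lam\<bar>*(1-th)" using th1 by (simp add: abs_mult)
      also have "\<dots> \<le> 2*\<bar>lam\<bar>*1" using th0 th1 by (intro mult_left_mono) auto
      finally show ?thesis using lam_K by simp
    qed
    then have "\<bar>2*lam*(1-th) + sg^2\<bar> \<le> 3*K^2"
    proof -
      assume a: "\<bar>2*lam*(1-th)\<bar> \<le> 2*K"
      have "2*lam*(1-th) \<le> 2*K" "-(2*lam*(1-th)) \<le> 2*K" using a by (auto simp only: abs_le_iff)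
      moreover have "0 \<le> sg^2" by simp
      ultimately show ?thesis unfolding abs_le_iff using sg_K K_le_K2 by linarith
    qed
    then have a: "\<bar>(2*lam*(1-th) + sg^2)*h^2\<bar> \<le> 3*K^2*h^2" by (simp add: abs_mult mult_right_mono)
    have "lam^2*(1-th)^2 + sg^4/2 \<le> 2*K^2"
    proof -
      have "(1-th)^2 \<le> 1" using th0 th1 by (simp add: power_le_one)
      then have "lam^2*(1-th)^2 \<le> K^2 * 1" using lam2K by (intro mult_mono) auto
      then show ?thesis using sg4K zero_le_power2[of K] by linarith
    qed
    moreover have "0 \<le> lam^2*(1-th)^2 + sg^4/2" by simp
    ultimately have b: "\<bar>(lam^2*(1-th)^2 + sg^4/2)*h^4\<bar> \<le> 2*K^2*h^2"
      using hpows by (simp add: abs_mult) (intro mult_mono, auto)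
    show ?thesis unfolding u_eq using a b by linarith
  qed
  have u2: "u^2 \<le> 25 * K^4 * h^4"
  proof -
    have "u^2 = \<bar>u\<bar>^2" by simp
    also have "\<dots> \<le> (5 * K^2 * h^2)^2" using u_abs by (intro power_mono) auto
    also have "\<dots> = 25 * K^4 * h^4" by (simp add: power_mult_distrib flip: power_mult)
    finally show ?thesis .
  qed
  have lo: "ln AA - (2*lam + sg^2)*h^2 \<ge> - (50 * K^4 * h^4)"
  proof -
    have "ln AA \<ge> u - 2*u^2 + 2*(lam*th*h^2)" using lnA lnN_lo lnd_up unfolding d_def by linarith
    moreover have "u + 2*(lam*th*h^2) = (2*lam + sg^2)*h^2 + (lam^2*(1-th)^2*h^4 + sg^4/2*h^4)"
      unfolding u_eq by (simp add: algebra_simps)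
    moreover have "0 \<le> lam^2*(1-th)^2*h^4 + sg^4/2*h^4" by simp
    ultimately show ?thesis using u2 by linarith
  qed
  have "6 * K^2 \<le> 50 * K^4" using K2_le_K4 zero_le_power2[of K] by linarith
  then have "6 * K^2 * h^4 \<le> 50 * K^4 * h^4" by (intro mult_right_mono) auto
  then show ?thesis using up lo unfolding CA_def abs_le_iff by linarith
qed

end

definition incr :: "(real \<Rightarrow> 'a \<Rightarrow> real) \<Rightarrow> real \<Rightarrow> nat \<Rightarrow> 'a \<Rightarrow> real" where
  "incr B dt k \<omega> = B (real (Suc k) * dt) \<omega> - B (real k * dt) \<omega>"

lemma incr_fun: "incr B dt k = (\<lambda>\<omega>. B (real (Suc k) * dt) \<omega> - B (real k * dt) \<omega>)"
  by (simp add: fun_eq_iff incr_def)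

lemma bm_prob: "brownian_motion M B \<Longrightarrow> prob_space M"
  by (simp add: brownian_motion_def)

lemma bm_incr_meas:
  assumes "brownian_motion M B" "dt > 0"
  shows "incr B dt k \<in> borel_measurable M"
proof -
  have "\<forall>t\<ge>0. B t \<in> borel_measurable M" using assms(1) by (simp add: brownian_motion_def)
  then have "B (real (Suc k) * dt) \<in> borel_measurable M" "B (real k * dt) \<in> borel_measurable M"
    using assms(2) by auto
  then show ?thesis unfolding incr_def by measurable
qed

lemma bm_incr_distr:
  assumes "brownian_motion M B" "dt > 0"
  shows "distributed M lborel (incr B dt k) (\<lambda>x. ennreal (normal_density 0 (sqrt dt) x))"
proof -
  have "\<forall>s t. 0 \<le> s \<and> s < t \<longrightarrow>
        distributed M lborel (\<lambda>\<omega>. B t \<omega> - B s \<omega>)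
          (\<lambda>x. ennreal (normal_density 0 (sqrt (t - s)) x))" using assms(1) by (simp add: brownian_motion_def)
  from this[rule_format, of "real k * dt" "real (Suc k) * dt"] assms(2)
  show ?thesis by (simp add: incr_fun algebra_simps)
qed

lemma bm_incr_indep:
  assumes "brownian_motion M B" "dt > 0"
  shows "prob_space.indep_vars M (\<lambda>_. borel) (incr B dt) {..<n}"
proof -
  define ts where "ts = map (\<lambda>k. real k * dt) [0..<Suc n]"
  have len: "length ts = Suc n" by (simp add: ts_def)
  have nth: "i \<le> n \<Longrightarrow> ts ! i = real i * dt" for i
    by (simp add: ts_def nth_map less_Suc_eq_le del: upt_Suc)
  have sorted: "sorted_wrt (<) ts"
    unfolding ts_def sorted_wrt_map
    by (rule sorted_wrt_mono_rel[OF _ sorted_wrt_upt]) (use assms(2) in auto)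
  have ne: "ts \<noteq> []" "hd ts \<ge> 0" by (auto simp: ts_def hd_map simp del: upt_Suc)
  interpret prob_space M using bm_prob[OF assms(1)] .
  have "prob_space.indep_vars M (\<lambda>_. borel) (\<lambda>i \<omega>. B (ts ! Suc i) \<omega> - B (ts ! i) \<omega>) {..< length ts - 1}"
    using assms(1) sorted ne unfolding brownian_motion_def by blast
  then show ?thesis
    using len nth
    by (subst indep_vars_cong[where Y="\<lambda>i \<omega>. B (ts ! Suc i) \<omega> - B (ts ! i) \<omega>" and J="{..<n}" and N'="\<lambda>_. borel"])
       (auto simp: incr_def fun_eq_iff)
qed

lemma (in prob_space) prod_expect:
  fixes D :: "nat \<Rightarrow> 'a \<Rightarrow> real" and g dens :: "real \<Rightarrow> real"
  assumes ind: "indep_vars (\<lambda>_. borel) D {..<n}"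
    and dist: "\<And>k. distributed M lborel (D k) (\<lambda>x. ennreal (dens x))"
    and dn: "\<And>x. 0 \<le> dens x"
    and g: "g \<in> borel_measurable borel"
    and gi: "integrable lborel (\<lambda>x. dens x * g x)"
  shows "integrable M (\<lambda>\<omega>. \<Prod>k<n. g (D k \<omega>))"
    and "(\<integral>\<omega>. (\<Prod>k<n. g (D k \<omega>)) \<partial>M) = (\<integral>x. dens x * g x \<partial>lborel)^n"
proof -
  have ind2: "indep_vars (\<lambda>_. borel) (\<lambda>k \<omega>. g (D k \<omega>)) {..<n}"
    by (rule indep_vars_compose2[OF ind]) (use g in simp)
  have int: "integrable M (\<lambda>\<omega>. g (D k \<omega>))" for k
    using distributed_integrable[OF dist[of k], of g] g gi dn by simp
  have val: "(\<integral>\<omega>. g (D k \<omega>) \<partial>M) = (\<integral>x. dens x * g x \<partial>lborel)" for k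
    using distributed_integral[OF dist[of k], of g] g dn by simp
  show "integrable M (\<lambda>\<omega>. \<Prod>k<n. g (D k \<omega>))"
    using indep_vars_integrable[OF _ ind2] int by simp
  have "(\<integral>\<omega>. (\<Prod>k<n. g (D k \<omega>)) \<partial>M) = (\<Prod>k<n. \<integral>\<omega>. g (D k \<omega>) \<partial>M)"
    using indep_vars_lebesgue_integral[OF _ ind2] int by simp
  also have "\<dots> = (\<integral>x. dens x * g x \<partial>lborel)^n" by (simp add: val)
  finally show "(\<integral>\<omega>. (\<Prod>k<n. g (D k \<omega>)) \<partial>M) = (\<integral>x. dens x * g x \<partial>lborel)^n" .
qed

lemma milstein_prod:
  assumes tm: "theta_milstein M B th lam sg x0 dt X" and d: "1 - lam * th * dt \<noteq> 0"
    and w: "\<omega> \<in> space M"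
  shows "X n \<omega> = x0 * (\<Prod>k<n. rr lam sg th dt (incr B dt k \<omega>))"
proof (induction n)
  case 0
  then show ?case using tm w by (simp add: theta_milstein_def)
next
  case (Suc n)
  have rec: "X (Suc n) \<omega> = X n \<omega>
             + (lam * th * X (Suc n) \<omega> + lam * (1 - th) * X n \<omega>) * dt
             + sg * X n \<omega> * incr B dt n \<omega>
             + sg\<^sup>2 / 2 * X n \<omega> * ((incr B dt n \<omega>)\<^sup>2 - dt)"
  proof -
    have "\<forall>m\<ge>1. let dB = B (real m * dt) \<omega> - B (real (m - 1) * dt) \<omega> in
           X m \<omega> = X (m - 1) \<omega>
             + (lam * th * X m \<omega> + lam * (1 - th) * X (m - 1) \<omega>) * dt
             + sg * X (m - 1) \<omega> * dB
             + sg\<^sup>2 / 2 * X (m - 1) \<omega> * (dB\<^sup>2 - dt)"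
      using tm w unfolding theta_milstein_def by blast
    from this[rule_format, of "Suc n"] show ?thesis
      unfolding Let_def incr_def by simp
  qed
  have "X (Suc n) \<omega> * (1 - lam * th * dt) = X n \<omega> * (1 + lam*(1-th)*dt + sg*incr B dt n \<omega> + sg^2/2*((incr B dt n \<omega>)^2 - dt))"
    using rec by (simp add: field_simps)
  then have "X (Suc n) \<omega> = X n \<omega> * rr lam sg th dt (incr B dt n \<omega>)"
    using d by (simp add: rr_def field_simps)
  then show ?case using Suc by (simp add: algebra_simps)
qed

lemma (in prob_space) chernoff_BC:
  fixes Z :: "nat \<Rightarrow> 'a \<Rightarrow> real" and c :: "nat \<Rightarrow> real"
  assumes meas: "\<And>n. Z n \<in> borel_measurable M" and int: "\<And>n. integrable M (Z n)"
    and nn: "\<And>n \<omega>. 0 \<le> Z n \<omega>"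
    and bound: "\<And>n. expectation (Z n) \<le> q^n * c n" and cpos: "\<And>n. c n > 0"
    and q: "0 \<le> q" "q < 1"
  shows "AE \<omega> in M. eventually (\<lambda>n. Z n \<omega> < c n) sequentially"
proof -
  define A where "A n = {\<omega>\<in>space M. c n \<le> Z n \<omega>}" for n
  have Am: "A n \<in> sets M" for n unfolding A_def using meas[of n] by measurable
  have mA: "measure M (A n) \<le> q^n" for n
  proof -
    have "measure M (A n) \<le> expectation (Z n) / c n"
      unfolding A_def using int[of n] nn cpos[of n] by (intro integral_Markov_inequality_measure) (auto simp: Am[unfolded A_def])
    also have "\<dots> \<le> q^n * c n / c n" using bound[of n] cpos[of n] by (intro divide_right_mono) auto
    also have "\<dots> = q^n" using cpos[of n] by simp
    finally show ?thesis .
  qed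
  have "summable (\<lambda>n. measure M (A n))"
    by (rule summable_comparison_test'[where g="\<lambda>n. q^n"]) (use mA q in \<open>auto intro: summable_geometric\<close>)
  then have "AE \<omega> in M. eventually (\<lambda>n. \<omega> \<in> space M - A n) sequentially"
    by (intro borel_cantelli_AE1 Am) (auto simp: emeasure_eq_measure)
  then show ?thesis
    by (rule AE_mp) (auto intro!: AE_I2 elim!: eventually_mono simp: A_def not_le)
qed

lemma alg1: "(dtt::real) = hh^2 \<Longrightarrow> rn * (- cl * hh^4) + hh * (rn * dtt * (mm + 2 * cl * hh)) = rn * (hh^3*mm + cl * hh^4)"
  by (simp add: algebra_simps power2_eq_square power3_eq_cube power4_eq_xxxx)

lemma alg2: "(dtt::real) = hh^2 \<Longrightarrow> rn * (- cl * hh^4) + (- hh) * (rn * dtt * (mm - 2 * cl * hh)) = rn * (- (hh^3*mm) + cl * hh^4)"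
  by (simp add: algebra_simps power2_eq_square power3_eq_cube power4_eq_xxxx)

lemma lim_aux: "(\<lambda>n. ereal (a / real n + T)) \<longlonglongrightarrow> ereal T"
proof -
  have "(\<lambda>n. a * (1 / real n) + T) \<longlonglongrightarrow> a * 0 + T"
    by (intro tendsto_intros lim_const_over_n[of 1, simplified])
  then show ?thesis by (simp add: tendsto_ereal)
qed

lemma limsup_le_of_ev:
  assumes "eventually (\<lambda>n. f n \<le> a / real n + T) sequentially"
  shows "limsup (\<lambda>n. ereal (f n)) \<le> ereal T"
proof -
  have "limsup (\<lambda>n. ereal (f n)) \<le> limsup (\<lambda>n. ereal (a / real n + T))"
    using assms by (intro Limsup_mono) (auto elim: eventually_mono)
  also have "\<dots> = ereal T" by (intro lim_imp_Limsup lim_aux) auto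
  finally show ?thesis .
qed

lemma limsup_ge_of_ev:
  assumes "eventually (\<lambda>n. a / real n + T \<le> f n) sequentially"
  shows "ereal T \<le> limsup (\<lambda>n. ereal (f n))"
proof -
  have "ereal T = limsup (\<lambda>n. ereal (a / real n + T))" by (intro lim_imp_Limsup[symmetric] lim_aux) auto
  also have "\<dots> \<le> limsup (\<lambda>n. ereal (f n))"
    using assms by (intro Limsup_mono) (auto elim: eventually_mono)
  finally show ?thesis .
qed

locale fixed_dt =
  fixes M :: "'a measure" and B :: "real \<Rightarrow> 'a \<Rightarrow> real" and th lam sg x0 dt :: real
    and X :: "nat \<Rightarrow> 'a \<Rightarrow> real"
  assumes th0: "0 \<le> th" and th1: "th \<le> 1" and x0: "x0 \<noteq> 0" and bm: "brownian_motion M B"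
    and dt0: "0 < dt" and dt1: "dt < 1" and smdt: "(\<bar>lam\<bar> + sg^2) * dt \<le> 1/4"
    and tm: "theta_milstein M B th lam sg x0 dt X"
begin

definition "h = sqrt dt"

lemma h0: "h > 0" and h1: "h \<le> 1" and hdt: "h^2 = dt"
  using dt0 dt1 by (auto simp: h_def)

sublocale C: core lam sg th h
  by unfold_locales (use th0 th1 h0 h1 smdt hdt in auto)

sublocale P: prob_space M by (rule bm_prob[OF bm])

definition "Y k \<omega> = rr lam sg th dt (incr B dt k \<omega>)"

lemma rr_dt: "rr lam sg th dt = rr lam sg th (h^2)" by (simp add: hdt)

lemma dne: "1 - lam * th * dt \<noteq> 0"
  using C.d_pos by (simp add: C.d_def hdt)

lemma Xprod: "\<omega> \<in> space M \<Longrightarrow> X n \<omega> = x0 * (\<Prod>k<n. Y k \<omega>)"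
  using milstein_prod[OF tm dne] by (simp add: Y_def)

lemma Y_ge: "Y k \<omega> \<ge> 1/5"
  unfolding Y_def rr_dt by (rule C.rr_ge)

lemma Y_pos: "Y k \<omega> > 0" using Y_ge[of k \<omega>] by linarith

lemma nd_eq: "normal_density 0 (sqrt dt) = C.nd" by (simp add: h_def)

lemma distr: "distributed M lborel (incr B dt k) (\<lambda>x. ennreal (C.nd x))"
  using bm_incr_distr[OF bm dt0] by (simp add: h_def)

lemma indep: "P.indep_vars (\<lambda>_. borel) (incr B dt) {..<n}"
  by (rule bm_incr_indep[OF bm dt0])

lemma rr_meas': "rr lam sg th dt \<in> borel_measurable borel"
  unfolding rr_def by measurable

lemma ms_value: "integral\<^sup>L M (\<lambda>\<omega>. (X n \<omega>)\<^sup>2) = x0^2 * C.AA^n"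
proof -
  have g: "(\<lambda>x. (rr lam sg th dt x)^2) \<in> borel_measurable borel" using rr_meas' by measurable
  have gi: "integrable lborel (\<lambda>x. C.nd x * (rr lam sg th dt x)^2)"
    using C.I_ms by (simp add: has_bochner_integral_iff rr_dt)
  have gv: "(\<integral>x. C.nd x * (rr lam sg th dt x)^2 \<partial>lborel) = C.AA"
    using C.I_ms by (simp add: has_bochner_integral_iff rr_dt)
  have "integral\<^sup>L M (\<lambda>\<omega>. (X n \<omega>)\<^sup>2) = integral\<^sup>L M (\<lambda>\<omega>. x0^2 * (\<Prod>k<n. (rr lam sg th dt (incr B dt k \<omega>))^2))"
    by (intro Bochner_Integration.integral_cong refl) (simp add: Xprod Y_def power_mult_distrib prod_power_distrib)
  also have "\<dots> = x0^2 * (\<integral>\<omega>. (\<Prod>k<n. (rr lam sg th dt (incr B dt k \<omega>))^2) \<partial>M)" by simp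
  also have "(\<integral>\<omega>. (\<Prod>k<n. (rr lam sg th dt (incr B dt k \<omega>))^2) \<partial>M) = C.AA^n"
    using P.prod_expect(2)[OF indep distr _ g gi] gv by simp
  finally show ?thesis .
qed

definition "m = lam - sg^2/2"
definition "C6 = 2 * C.CL"

lemma CU_le_CL: "C.CU \<le> C.CL" unfolding C.CU_def C.CL_def by simp

lemma CL_pos: "C.CL > 0" unfolding C.CL_def using C.K_ge1 by simp

lemma Y_meas: "(\<lambda>\<omega>. f (Y k \<omega>)) \<in> borel_measurable M" if "f \<in> borel_measurable borel"
proof -
  have "incr B dt k \<in> borel_measurable M" by (rule bm_incr_meas[OF bm dt0])
  then show ?thesis unfolding Y_def using rr_meas' that by measurable
qed

lemma exp_powr: "exp (y::real) powr r = exp (r * y)" by (simp add: powr_def)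

lemma prod_meas: "(\<lambda>\<omega>. \<Prod>k<n. f (Y k \<omega>)) \<in> borel_measurable M" if "(f::real\<Rightarrow>real) \<in> borel_measurable borel"
  using borel_measurable_prod[of "{..<n}" "\<lambda>k \<omega>. f (Y k \<omega>)" M] Y_meas[OF that] by blast

lemma hdt3: "h * dt = h^3" by (metis hdt power3_eq_cube power2_eq_square mult.assoc)

lemma as_upper: "AE \<omega> in M. eventually (\<lambda>n. (\<Prod>k<n. Y k \<omega>) < exp (real n * dt * (m + C6 * h))) sequentially"
proof -
  define q where "q = exp (- C.CL * h^4)"
  define c where "c n = exp (h * (real n * dt * (m + C6 * h)))" for n :: nat
  define Z where "Z n \<omega> = (\<Prod>k<n. Y k \<omega> powr h)" for n \<omega>
  have gm: "(\<lambda>x. rr lam sg th dt x powr h) \<in> borel_measurable borel" using rr_meas' by measurable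
  have gi: "integrable lborel (\<lambda>x. C.nd x * rr lam sg th dt x powr h)"
    using C.E_up(1) by (simp add: rr_dt)
  define I where "I = (\<integral>x. C.nd x * rr lam sg th dt x powr h \<partial>lborel)"
  have I_le: "I \<le> 1 + h^3*(lam - sg^2/2) + C.CU * h^4"
    using C.E_up(2) C.VU_bound unfolding I_def rr_dt by linarith
  have I_nn: "0 \<le> I" unfolding I_def by (intro integral_nonneg_AE) auto
  have EZ: "P.expectation (Z n) = I^n" for n
    using P.prod_expect(2)[OF indep distr _ gm gi] unfolding Z_def I_def Y_def by simp
  have iZ: "integrable M (Z n)" for n
    using P.prod_expect(1)[OF indep distr _ gm gi] unfolding Z_def Y_def by simp
  have bound: "P.expectation (Z n) \<le> q^n * c n" for n
  proof -
    have "I \<le> exp (h^3*m + C.CL * h^4)"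
    proof -
      have "I \<le> 1 + (h^3*m + C.CU * h^4)" using I_le by (simp add: m_def)
      also have "\<dots> \<le> exp (h^3*m + C.CU * h^4)" by (rule exp_ge_add_one_self)
      also have "\<dots> \<le> exp (h^3*m + C.CL * h^4)" using CU_le_CL by (simp add: mult_right_mono)
      finally show ?thesis .
    qed
    then have "I^n \<le> exp (h^3*m + C.CL * h^4)^n" using I_nn by (intro power_mono) auto
    also have "\<dots> = q^n * c n"
    proof -
      have e: "real n * (- C.CL * h^4) + h * (real n * dt * (m + C6 * h)) = real n * (h^3*m + C.CL * h^4)"
        unfolding C6_def by (rule alg1[OF hdt[symmetric]])
      have "q^n * c n = exp (real n * (- C.CL * h^4) + h * (real n * dt * (m + C6 * h)))"
        unfolding q_def c_def by (simp only: exp_of_nat_mult[symmetric] exp_add[symmetric])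
      also have "\<dots> = exp (h^3*m + C.CL * h^4)^n" unfolding e by (simp add: exp_of_nat_mult)
      finally show ?thesis by simp
    qed
    finally show ?thesis using EZ by simp
  qed
  have ae: "AE \<omega> in M. eventually (\<lambda>n. Z n \<omega> < c n) sequentially"
  proof (rule P.chernoff_BC[OF _ iZ _ bound])
    show "Z n \<in> borel_measurable M" for n unfolding Z_def
      using prod_meas[of "\<lambda>x. x powr h" n] by measurable
    show "0 \<le> Z n \<omega>" for n \<omega> unfolding Z_def by (simp add: prod_nonneg)
    show "0 < c n" for n unfolding c_def by simp
    show "0 \<le> q" "q < 1" unfolding q_def using CL_pos h0 by auto
  qed
  show ?thesis
  proof (rule AE_mp[OF ae], intro AE_I2 impI, elim eventually_mono)
    fix \<omega> n assume "Z n \<omega> < c n"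
    then have "(\<Prod>k<n. Y k \<omega>) powr h < exp (real n * dt * (m + C6 * h)) powr h"
      unfolding Z_def c_def exp_powr by (simp add: prod_powr_distrib)
    then show "(\<Prod>k<n. Y k \<omega>) < exp (real n * dt * (m + C6 * h))"
    proof (rule contrapos_pp)
      assume "\<not> (\<Prod>k<n. Y k \<omega>) < exp (real n * dt * (m + C6 * h))"
      then have "exp (real n * dt * (m + C6 * h)) \<le> (\<Prod>k<n. Y k \<omega>)" by simp
      then have "exp (real n * dt * (m + C6 * h)) powr h \<le> (\<Prod>k<n. Y k \<omega>) powr h"
        using h0 by (intro powr_mono2) auto
      then show "\<not> (\<Prod>k<n. Y k \<omega>) powr h < exp (real n * dt * (m + C6 * h)) powr h" by simp
    qed
  qed
qed

lemma as_lower: "AE \<omega> in M. eventually (\<lambda>n. exp (real n * dt * (m - C6 * h)) < (\<Prod>k<n. Y k \<omega>)) sequentially"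
proof -
  define q where "q = exp (- C.CL * h^4)"
  define c where "c n = exp ((-h) * (real n * dt * (m - C6 * h)))" for n :: nat
  define Z where "Z n \<omega> = (\<Prod>k<n. Y k \<omega> powr (-h))" for n \<omega>
  have gm: "(\<lambda>x. rr lam sg th dt x powr (-h)) \<in> borel_measurable borel" using rr_meas' by measurable
  have gi: "integrable lborel (\<lambda>x. C.nd x * rr lam sg th dt x powr (-h))"
    using C.E_lo(1) by (simp add: rr_dt)
  define I where "I = (\<integral>x. C.nd x * rr lam sg th dt x powr (-h) \<partial>lborel)"
  have I_le: "I \<le> 1 - h^3*(lam - sg^2/2) + C.CL * h^4"
    using C.E_lo(2) C.VL_bound unfolding I_def rr_dt by linarith
  have I_nn: "0 \<le> I" unfolding I_def by (intro integral_nonneg_AE) auto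
  have EZ: "P.expectation (Z n) = I^n" for n
    using P.prod_expect(2)[OF indep distr _ gm gi] unfolding Z_def I_def Y_def by simp
  have iZ: "integrable M (Z n)" for n
    using P.prod_expect(1)[OF indep distr _ gm gi] unfolding Z_def Y_def by simp
  have bound: "P.expectation (Z n) \<le> q^n * c n" for n
  proof -
    have "I \<le> exp (- (h^3*m) + C.CL * h^4)"
    proof -
      have "I \<le> 1 + (- (h^3*m) + C.CL * h^4)" using I_le by (simp add: m_def)
      also have "\<dots> \<le> exp (- (h^3*m) + C.CL * h^4)" by (rule exp_ge_add_one_self)
      finally show ?thesis .
    qed
    then have "I^n \<le> exp (- (h^3*m) + C.CL * h^4)^n" using I_nn by (intro power_mono) auto
    also have "\<dots> = q^n * c n"
    proof -
      have e: "real n * (- C.CL * h^4) + (-h) * (real n * dt * (m - C6 * h)) = real n * (- (h^3*m) + C.CL * h^4)"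
        unfolding C6_def by (rule alg2[OF hdt[symmetric]])
      have "q^n * c n = exp (real n * (- C.CL * h^4) + (-h) * (real n * dt * (m - C6 * h)))"
        unfolding q_def c_def by (simp only: exp_of_nat_mult[symmetric] exp_add[symmetric])
      also have "\<dots> = exp (- (h^3*m) + C.CL * h^4)^n" unfolding e by (simp add: exp_of_nat_mult)
      finally show ?thesis by simp
    qed
    finally show ?thesis using EZ by simp
  qed
  have ae: "AE \<omega> in M. eventually (\<lambda>n. Z n \<omega> < c n) sequentially"
  proof (rule P.chernoff_BC[OF _ iZ _ bound])
    show "Z n \<in> borel_measurable M" for n unfolding Z_def
      using prod_meas[of "\<lambda>x. x powr (-h)" n] by measurable
    show "0 \<le> Z n \<omega>" for n \<omega> unfolding Z_def by (simp add: prod_nonneg)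
    show "0 < c n" for n unfolding c_def by simp
    show "0 \<le> q" "q < 1" unfolding q_def using CL_pos h0 by auto
  qed
  show ?thesis
  proof (rule AE_mp[OF ae], intro AE_I2 impI, elim eventually_mono)
    fix \<omega> n assume "Z n \<omega> < c n"
    then have lt: "(\<Prod>k<n. Y k \<omega>) powr (-h) < exp (real n * dt * (m - C6 * h)) powr (-h)"
      unfolding Z_def c_def exp_powr by (simp add: prod_powr_distrib)
    have pp: "(\<Prod>k<n. Y k \<omega>) > 0" using Y_pos by (simp add: prod_pos)
    show "exp (real n * dt * (m - C6 * h)) < (\<Prod>k<n. Y k \<omega>)"
    proof (rule ccontr)
      assume "\<not> exp (real n * dt * (m - C6 * h)) < (\<Prod>k<n. Y k \<omega>)"
      then have "(\<Prod>k<n. Y k \<omega>) \<le> exp (real n * dt * (m - C6 * h))" by simp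
      then have "exp (real n * dt * (m - C6 * h)) powr (-h) \<le> (\<Prod>k<n. Y k \<omega>) powr (-h)"
        using h0 pp by (intro powr_mono2') auto
      then show False using lt by simp
    qed
  qed
qed

definition "rho = ln C.AA / (2 * dt)"

lemma AA_pos: "C.AA > 0"
proof -
  have "(1 + lam*(1-th)*h^2)^2 + sg^2*h^2 + 2*C.b^2*h^4 > 0"
  proof -
    have "\<bar>lam*(1-th)*h^2\<bar> \<le> \<bar>lam\<bar> * h^2"
    proof -
      have "\<bar>lam*(1-th)*h^2\<bar> = \<bar>lam\<bar> * (1-th) * h^2" using th1 by (simp add: abs_mult)
      also have "\<dots> \<le> \<bar>lam\<bar> * 1 * h^2" using th1 th0 by (intro mult_right_mono mult_left_mono) auto
      finally show ?thesis by simp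
    qed
    then have "1 + lam*(1-th)*h^2 > 0" using C.lamh by (auto simp: abs_le_iff)
    then show ?thesis by (intro add_pos_nonneg) auto
  qed
  then show ?thesis unfolding C.AA_def using C.d_pos by simp
qed

lemma sqrt_ms: "sqrt (integral\<^sup>L M (\<lambda>\<omega>. (X n \<omega>)\<^sup>2)) = \<bar>x0\<bar> * exp (rho * (real n * dt))"
proof -
  have "C.AA^n = exp (real n * ln C.AA)" using AA_pos by (simp add: exp_of_nat_mult)
  then have "sqrt (x0^2 * C.AA^n) = \<bar>x0\<bar> * sqrt (exp (real n * ln C.AA))" by (simp add: real_sqrt_mult)
  also have "sqrt (exp (real n * ln C.AA)) = exp (real n * ln C.AA / 2)"
    by (rule real_sqrt_unique) (simp_all add: power2_eq_square flip: exp_add)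
  also have "real n * ln C.AA / 2 = rho * (real n * dt)" unfolding rho_def using dt0 by (simp add: field_simps)
  finally show ?thesis by (simp add: ms_value)
qed

lemma ms_limsup: "limsup (\<lambda>n. ereal (ln (sqrt (integral\<^sup>L M (\<lambda>\<omega>. (X n \<omega>)\<^sup>2))) / (real n * dt))) = ereal rho"
proof -
  have ev: "eventually (\<lambda>n. ln (sqrt (integral\<^sup>L M (\<lambda>\<omega>. (X n \<omega>)\<^sup>2))) / (real n * dt) = ln \<bar>x0\<bar> / dt * (1 / real n) + rho) sequentially"
  proof (rule eventually_sequentiallyI[of 1])
    fix n :: nat assume n: "1 \<le> n"
    have "ln (sqrt (integral\<^sup>L M (\<lambda>\<omega>. (X n \<omega>)\<^sup>2))) = ln \<bar>x0\<bar> + rho * (real n * dt)"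
      unfolding sqrt_ms using x0 by (simp add: ln_mult)
    then show "ln (sqrt (integral\<^sup>L M (\<lambda>\<omega>. (X n \<omega>)\<^sup>2))) / (real n * dt) = ln \<bar>x0\<bar> / dt * (1 / real n) + rho"
      using n dt0 by (simp add: field_simps)
  qed
  have "(\<lambda>n. ln \<bar>x0\<bar> / dt * (1 / real n) + rho) \<longlonglongrightarrow> ln \<bar>x0\<bar> / dt * 0 + rho"
    by (intro tendsto_intros lim_const_over_n[of 1, simplified])
  then have "(\<lambda>n. ln (sqrt (integral\<^sup>L M (\<lambda>\<omega>. (X n \<omega>)\<^sup>2))) / (real n * dt)) \<longlonglongrightarrow> rho"
    using ev by (simp add: tendsto_cong)
  then have "(\<lambda>n. ereal (ln (sqrt (integral\<^sup>L M (\<lambda>\<omega>. (X n \<omega>)\<^sup>2))) / (real n * dt))) \<longlonglongrightarrow> ereal rho"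
    by (simp add: tendsto_ereal)
  then show ?thesis by (intro lim_imp_Limsup) auto
qed

definition "C5 = C.CA"

lemma CA_nn: "C.CA \<ge> 0" unfolding C.CA_def by simp

lemma rho_bound: "\<bar>rho - (lam + sg^2/2)\<bar> \<le> C5 * dt"
proof -
  have h4: "h^4 = dt^2" using hdt by (metis power_mult numeral_times_numeral semiring_norm(12) num_double power2_eq_square power4_eq_xxxx)
  have h2: "(2*lam + sg^2)*h^2 = (2*lam + sg^2)*dt" by (simp add: hdt)
  have "\<bar>ln C.AA - (2*lam + sg^2)*dt\<bar> \<le> C.CA * dt^2" using C.lnAA unfolding h4 h2 .
  moreover have "rho - (lam + sg^2/2) = (ln C.AA - (2*lam + sg^2)*dt) / (2*dt)"
    unfolding rho_def using dt0 by (simp add: field_simps)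
  ultimately have "\<bar>rho - (lam + sg^2/2)\<bar> \<le> C.CA * dt^2 / (2*dt)"
    using dt0 by (simp add: abs_divide divide_right_mono)
  also have "\<dots> = C.CA * dt / 2" using dt0 by (simp add: power2_eq_square)
  also have "\<dots> \<le> C.CA * dt" using CA_nn dt0 by simp
  finally show ?thesis unfolding C5_def .
qed

lemma as_result: "AE \<omega> in M.
   ereal (m - C6 * h) \<le> limsup (\<lambda>n. ereal (ln \<bar>X n \<omega>\<bar> / (real n * dt))) \<and>
   limsup (\<lambda>n. ereal (ln \<bar>X n \<omega>\<bar> / (real n * dt))) \<le> ereal (m + C6 * h) \<and>
   eventually (\<lambda>n. \<bar>X n \<omega>\<bar> \<le> \<bar>x0\<bar> * exp ((m + C6 * h) * (real n * dt))) sequentially \<and>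
   eventually (\<lambda>n. \<bar>X n \<omega>\<bar> \<ge> \<bar>x0\<bar> * exp ((m - C6 * h) * (real n * dt))) sequentially"
  using as_upper as_lower AE_space
proof (eventually_elim)
  case (elim \<omega>)
  then have up: "eventually (\<lambda>n. (\<Prod>k<n. Y k \<omega>) < exp (real n * dt * (m + C6 * h))) sequentially"
    and lo: "eventually (\<lambda>n. exp (real n * dt * (m - C6 * h)) < (\<Prod>k<n. Y k \<omega>)) sequentially"
    and sp: "\<omega> \<in> space M" by auto
  have pp: "(\<Prod>k<n. Y k \<omega>) > 0" for n using Y_pos by (simp add: prod_pos)
  have Xa: "\<bar>X n \<omega>\<bar> = \<bar>x0\<bar> * (\<Prod>k<n. Y k \<omega>)" for n
    using Xprod[OF sp, of n] pp[of n] by (simp add: abs_mult)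
  have lnX: "ln \<bar>X n \<omega>\<bar> = ln \<bar>x0\<bar> + ln (\<Prod>k<n. Y k \<omega>)" for n
  proof -
    have "\<bar>x0\<bar> > 0" using x0 by simp
    then show ?thesis unfolding Xa using pp[of n] by (rule ln_mult_pos)
  qed
  have e1: "eventually (\<lambda>n. ln \<bar>X n \<omega>\<bar> / (real n * dt) \<le> (ln \<bar>x0\<bar> / dt) / real n + (m + C6 * h)) sequentially"
    using up eventually_ge_at_top[of 1]
  proof (eventually_elim)
    case (elim n)
    then have "ln (\<Prod>k<n. Y k \<omega>) < real n * dt * (m + C6 * h)"
      using pp[of n] by (metis exp_gt_zero ln_exp ln_less_cancel_iff)
    then have "ln \<bar>X n \<omega>\<bar> \<le> ln \<bar>x0\<bar> + real n * dt * (m + C6 * h)" unfolding lnX by simp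
    moreover have "real n * dt > 0" using elim dt0 by simp
    ultimately have "ln \<bar>X n \<omega>\<bar> / (real n * dt) \<le> (ln \<bar>x0\<bar> + real n * dt * (m + C6 * h)) / (real n * dt)"
      by (intro divide_right_mono) auto
    also have "\<dots> = (ln \<bar>x0\<bar> / dt) / real n + (m + C6 * h)" using elim dt0 by (simp add: field_simps)
    finally show ?case .
  qed
  have e2: "eventually (\<lambda>n. (ln \<bar>x0\<bar> / dt) / real n + (m - C6 * h) \<le> ln \<bar>X n \<omega>\<bar> / (real n * dt)) sequentially"
    using lo eventually_ge_at_top[of 1]
  proof (eventually_elim)
    case (elim n)
    then have "real n * dt * (m - C6 * h) < ln (\<Prod>k<n. Y k \<omega>)"
      using pp[of n] by (metis exp_gt_zero ln_exp ln_less_cancel_iff)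
    then have "ln \<bar>x0\<bar> + real n * dt * (m - C6 * h) \<le> ln \<bar>X n \<omega>\<bar>" unfolding lnX by simp
    moreover have "real n * dt > 0" using elim dt0 by simp
    ultimately have "(ln \<bar>x0\<bar> + real n * dt * (m - C6 * h)) / (real n * dt) \<le> ln \<bar>X n \<omega>\<bar> / (real n * dt)"
      by (intro divide_right_mono) auto
    moreover have "(ln \<bar>x0\<bar> + real n * dt * (m - C6 * h)) / (real n * dt) = (ln \<bar>x0\<bar> / dt) / real n + (m - C6 * h)"
      using elim dt0 by (simp add: field_simps)
    ultimately show ?case by simp
  qed
  have e3: "eventually (\<lambda>n. \<bar>X n \<omega>\<bar> \<le> \<bar>x0\<bar> * exp ((m + C6 * h) * (real n * dt))) sequentially"
    using up by eventually_elim (simp add: Xa mult_left_mono less_imp_le mult.commute mult.left_commute)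
  have e4: "eventually (\<lambda>n. \<bar>X n \<omega>\<bar> \<ge> \<bar>x0\<bar> * exp ((m - C6 * h) * (real n * dt))) sequentially"
    using lo by eventually_elim (simp add: Xa mult_left_mono less_imp_le mult.commute mult.left_commute)
  show ?case using limsup_le_of_ev[OF e1] limsup_ge_of_ev[OF e2] e3 e4 by simp
qed

end

lemma (in fixed_dt) C5_val: "C5 = 50 * (1 + \<bar>lam\<bar> + sg^2)^4"
  unfolding C5_def C.CA_def C.K_def by simp

lemma (in fixed_dt) C6_val: "C6 = 30000000 * (1 + \<bar>lam\<bar> + sg^2)^4"
  unfolding C6_def C.CL_def C.K_def by simp

theorem proposition3p2:
  fixes M :: "'a measure" and B :: "real \<Rightarrow> 'a \<Rightarrow> real"
    and \<theta> lam \<sigma> x0 :: real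
  assumes "0 \<le> \<theta>" "\<theta> \<le> 1" "x0 \<noteq> 0" "brownian_motion M B"
  shows "\<exists>dt3 C5 C6. 0 < dt3 \<and> dt3 < 1 \<and> C5 > 0 \<and> C6 > 0 \<and>
    (\<forall>dt X. 0 < dt \<and> dt < dt3 \<and> 1 - lam * \<theta> * dt \<noteq> 0 \<and>
            theta_milstein M B \<theta> lam \<sigma> x0 dt X \<longrightarrow>
      ereal (lam + \<sigma>\<^sup>2 / 2 - C5 * dt)
        \<le> limsup (\<lambda>n. ereal (ln (sqrt (integral\<^sup>L M (\<lambda>\<omega>. (X n \<omega>)\<^sup>2))) / (real n * dt))) \<and>
      limsup (\<lambda>n. ereal (ln (sqrt (integral\<^sup>L M (\<lambda>\<omega>. (X n \<omega>)\<^sup>2))) / (real n * dt)))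
        \<le> ereal (lam + \<sigma>\<^sup>2 / 2 + C5 * dt) \<and>
      (AE \<omega> in M.
         ereal (lam - \<sigma>\<^sup>2 / 2 - C6 * sqrt dt)
           \<le> limsup (\<lambda>n. ereal (ln \<bar>X n \<omega>\<bar> / (real n * dt))) \<and>
         limsup (\<lambda>n. ereal (ln \<bar>X n \<omega>\<bar> / (real n * dt)))
           \<le> ereal (lam - \<sigma>\<^sup>2 / 2 + C6 * sqrt dt)) \<and>
      (lam + \<sigma>\<^sup>2 / 2 < 0 \<longrightarrow> ms_exp_stable M dt X) \<and>
      (lam + \<sigma>\<^sup>2 / 2 > 0 \<longrightarrow> ms_exp_blowup M dt X) \<and>
      (lam - \<sigma>\<^sup>2 / 2 < 0 \<longrightarrow> as_exp_stable M dt X) \<and>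
      (lam - \<sigma>\<^sup>2 / 2 > 0 \<longrightarrow> as_exp_blowup M dt X))"
proof -
  define K where "K = 1 + \<bar>lam\<bar> + \<sigma>^2"
  define C5 where "C5 = 50 * K^4"
  define C6 where "C6 = 30000000 * K^4"
  define a where "a = lam + \<sigma>\<^sup>2 / 2"
  define mm where "mm = lam - \<sigma>\<^sup>2 / 2"
  define e1 where "e1 = (if a = 0 then 1 else \<bar>a\<bar> / (2 * C5))"
  define e2 where "e2 = (if mm = 0 then 1 else (\<bar>mm\<bar> / (2 * C6))^2)"
  define dt3 where "dt3 = min (1/2) (min (1 / (4 * (\<bar>lam\<bar> + \<sigma>^2) + 1)) (min e1 e2))"
  have K1: "K \<ge> 1" unfolding K_def by simp
  have C5p: "C5 > 0" and C6p: "C6 > 0" unfolding C5_def C6_def using K1 by auto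
  have e1p: "e1 > 0" and e2p: "e2 > 0" unfolding e1_def e2_def using C5p C6p by auto
  have pq: "0 < 4 * (\<bar>lam\<bar> + \<sigma>^2) + 1"
    using abs_ge_zero[of lam] zero_le_power2[of \<sigma>] unfolding distrib_left by linarith
  have dt3p: "0 < dt3" and dt3l: "dt3 < 1"
    unfolding dt3_def using e1p e2p pq by auto
  show ?thesis
  proof (intro exI conjI allI impI)
    show "0 < dt3" "dt3 < 1" "C5 > 0" "C6 > 0" by (fact dt3p dt3l C5p C6p)+
  next
    fix dt :: real and X :: "nat \<Rightarrow> 'a \<Rightarrow> real"
    assume H: "0 < dt \<and> dt < dt3 \<and> 1 - lam * \<theta> * dt \<noteq> 0 \<and> theta_milstein M B \<theta> lam \<sigma> x0 dt X"
    then have dt0: "0 < dt" and dtl: "dt < dt3" and tm: "theta_milstein M B \<theta> lam \<sigma> x0 dt X" by auto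
    have dt1: "dt < 1" using dtl dt3l by simp
    have sm: "(\<bar>lam\<bar> + \<sigma>^2) * dt \<le> 1/4"
    proof -
      define s where "s = \<bar>lam\<bar> + \<sigma>^2"
      have s0: "s \<ge> 0" unfolding s_def by simp
      have "dt \<le> 1 / (4 * s + 1)" using dtl unfolding dt3_def s_def by simp
      then have "s * dt \<le> s * (1 / (4 * s + 1))" using s0 by (intro mult_left_mono) auto
      also have "\<dots> \<le> 1/4" using s0 by (simp add: field_simps)
      finally show ?thesis unfolding s_def .
    qed
    interpret F: fixed_dt M B \<theta> lam \<sigma> x0 dt X
      by unfold_locales (use assms dt0 dt1 sm tm in auto)
    have C5e: "F.C5 = C5" unfolding F.C5_val C5_def K_def ..
    have C6e: "F.C6 = C6" unfolding F.C6_val C6_def K_def ..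
    have he: "F.h = sqrt dt" by (simp add: F.h_def)
    have me: "F.m = mm" by (simp add: F.m_def mm_def)
    have rb: "\<bar>F.rho - a\<bar> \<le> C5 * dt" using F.rho_bound unfolding C5e a_def .
    show "ereal (lam + \<sigma>\<^sup>2 / 2 - C5 * dt) \<le> limsup (\<lambda>n. ereal (ln (sqrt (integral\<^sup>L M (\<lambda>\<omega>. (X n \<omega>)\<^sup>2))) / (real n * dt)))"
      unfolding F.ms_limsup using rb unfolding a_def by (simp add: abs_le_iff)
    show "limsup (\<lambda>n. ereal (ln (sqrt (integral\<^sup>L M (\<lambda>\<omega>. (X n \<omega>)\<^sup>2))) / (real n * dt))) \<le> ereal (lam + \<sigma>\<^sup>2 / 2 + C5 * dt)"
      unfolding F.ms_limsup using rb unfolding a_def by (simp add: abs_le_iff)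
    have ASR: "AE \<omega> in M.
       ereal (mm - C6 * sqrt dt) \<le> limsup (\<lambda>n. ereal (ln \<bar>X n \<omega>\<bar> / (real n * dt))) \<and>
       limsup (\<lambda>n. ereal (ln \<bar>X n \<omega>\<bar> / (real n * dt))) \<le> ereal (mm + C6 * sqrt dt) \<and>
       eventually (\<lambda>n. \<bar>X n \<omega>\<bar> \<le> \<bar>x0\<bar> * exp ((mm + C6 * sqrt dt) * (real n * dt))) sequentially \<and>
       eventually (\<lambda>n. \<bar>X n \<omega>\<bar> \<ge> \<bar>x0\<bar> * exp ((mm - C6 * sqrt dt) * (real n * dt))) sequentially"
      using F.as_result unfolding C6e he me .
    show "AE \<omega> in M.
         ereal (lam - \<sigma>\<^sup>2 / 2 - C6 * sqrt dt)
           \<le> limsup (\<lambda>n. ereal (ln \<bar>X n \<omega>\<bar> / (real n * dt))) \<and>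
         limsup (\<lambda>n. ereal (ln \<bar>X n \<omega>\<bar> / (real n * dt)))
           \<le> ereal (lam - \<sigma>\<^sup>2 / 2 + C6 * sqrt dt)"
      using ASR unfolding mm_def by (rule AE_mp) (auto intro!: AE_I2)
    have x0p: "\<bar>x0\<bar> > 0" using assms(3) by simp
    have dte1: "a \<noteq> 0 \<Longrightarrow> C5 * dt < \<bar>a\<bar> / 2"
    proof -
      assume "a \<noteq> 0"
      then have "dt < \<bar>a\<bar> / (2 * C5)" using dtl unfolding dt3_def e1_def by simp
      then show ?thesis using C5p by (simp add: field_simps)
    qed
    show "ms_exp_stable M dt X" if "lam + \<sigma>\<^sup>2 / 2 < 0"
    proof -
      have an: "a < 0" using that unfolding a_def .
      then have "F.rho < 0" using rb dte1 by (auto simp: abs_le_iff)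
      then show ?thesis unfolding ms_exp_stable_def
        by (intro exI[of _ "\<bar>x0\<bar>"] exI[of _ "- F.rho"] conjI x0p always_eventually allI) (auto simp: F.sqrt_ms)
    qed
    show "ms_exp_blowup M dt X" if "lam + \<sigma>\<^sup>2 / 2 > 0"
    proof -
      have an: "a > 0" using that unfolding a_def .
      then have "F.rho > 0" using rb dte1 by (auto simp: abs_le_iff)
      then show ?thesis unfolding ms_exp_blowup_def
        by (intro exI[of _ "\<bar>x0\<bar>"] exI[of _ "F.rho"] conjI x0p always_eventually allI) (auto simp: F.sqrt_ms)
    qed
    have dte2: "mm \<noteq> 0 \<Longrightarrow> C6 * sqrt dt < \<bar>mm\<bar> / 2"
    proof -
      assume "mm \<noteq> 0"
      then have "dt < (\<bar>mm\<bar> / (2 * C6))^2" using dtl unfolding dt3_def e2_def by simp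
      then have "sqrt dt < \<bar>mm\<bar> / (2 * C6)" using C6p by (metis abs_div_pos abs_ge_zero abs_of_nonneg real_less_lsqrt real_sqrt_ge_zero zero_less_mult_iff zero_less_numeral)
      then show ?thesis using C6p by (simp add: field_simps)
    qed
    show "as_exp_stable M dt X" if "lam - \<sigma>\<^sup>2 / 2 < 0"
    proof -
      have mn: "mm < 0" using that unfolding mm_def .
      then have neg: "mm + C6 * sqrt dt < 0" using dte2 by auto
      show ?thesis unfolding as_exp_stable_def
      proof (intro exI[of _ "- (mm + C6 * sqrt dt)"] conjI)
        show "0 < - (mm + C6 * sqrt dt)" using neg by simp
        show "AE \<omega> in M. \<exists>C>0. \<forall>\<^sub>F n in sequentially. \<bar>X n \<omega>\<bar> \<le> C * exp (- (- (mm + C6 * sqrt dt)) * (real n * dt))"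
          using ASR
        proof (rule AE_mp, intro AE_I2 impI)
          fix \<omega> assume A: "ereal (mm - C6 * sqrt dt) \<le> limsup (\<lambda>n. ereal (ln \<bar>X n \<omega>\<bar> / (real n * dt))) \<and>
       limsup (\<lambda>n. ereal (ln \<bar>X n \<omega>\<bar> / (real n * dt))) \<le> ereal (mm + C6 * sqrt dt) \<and>
       eventually (\<lambda>n. \<bar>X n \<omega>\<bar> \<le> \<bar>x0\<bar> * exp ((mm + C6 * sqrt dt) * (real n * dt))) sequentially \<and>
       eventually (\<lambda>n. \<bar>X n \<omega>\<bar> \<ge> \<bar>x0\<bar> * exp ((mm - C6 * sqrt dt) * (real n * dt))) sequentially"
          then have ev: "eventually (\<lambda>n. \<bar>X n \<omega>\<bar> \<le> \<bar>x0\<bar> * exp ((mm + C6 * sqrt dt) * (real n * dt))) sequentially" by blast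
          show "\<exists>C>0. \<forall>\<^sub>F n in sequentially. \<bar>X n \<omega>\<bar> \<le> C * exp (- (- (mm + C6 * sqrt dt)) * (real n * dt))"
            using x0p ev by (intro exI[of _ "\<bar>x0\<bar>"]) (simp add: add.commute)
        qed
      qed
    qed
    show "as_exp_blowup M dt X" if "lam - \<sigma>\<^sup>2 / 2 > 0"
    proof -
      have mn: "mm > 0" using that unfolding mm_def .
      then have pos: "mm - C6 * sqrt dt > 0" using dte2 by auto
      show ?thesis unfolding as_exp_blowup_def
      proof (intro exI[of _ "mm - C6 * sqrt dt"] conjI)
        show "0 < mm - C6 * sqrt dt" using pos by simp
        show "AE \<omega> in M. \<exists>C>0. \<forall>\<^sub>F n in sequentially. \<bar>X n \<omega>\<bar> \<ge> C * exp ((mm - C6 * sqrt dt) * (real n * dt))"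
          using ASR
        proof (rule AE_mp, intro AE_I2 impI)
          fix \<omega> assume A: "ereal (mm - C6 * sqrt dt) \<le> limsup (\<lambda>n. ereal (ln \<bar>X n \<omega>\<bar> / (real n * dt))) \<and>
       limsup (\<lambda>n. ereal (ln \<bar>X n \<omega>\<bar> / (real n * dt))) \<le> ereal (mm + C6 * sqrt dt) \<and>
       eventually (\<lambda>n. \<bar>X n \<omega>\<bar> \<le> \<bar>x0\<bar> * exp ((mm + C6 * sqrt dt) * (real n * dt))) sequentially \<and>
       eventually (\<lambda>n. \<bar>X n \<omega>\<bar> \<ge> \<bar>x0\<bar> * exp ((mm - C6 * sqrt dt) * (real n * dt))) sequentially"
          then have ev: "eventually (\<lambda>n. \<bar>X n \<omega>\<bar> \<ge> \<bar>x0\<bar> * exp ((mm - C6 * sqrt dt) * (real n * dt))) sequentially" by blast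
          show "\<exists>C>0. \<forall>\<^sub>F n in sequentially. \<bar>X n \<omega>\<bar> \<ge> C * exp ((mm - C6 * sqrt dt) * (real n * dt))"
            using x0p ev by (intro exI[of _ "\<bar>x0\<bar>"]) (simp add: add.commute)
        qed
      qed
    qed
  qed
qed

end
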